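(* For every $n>2$, the set $\mathrm{FC}(B_n)$ is not Poirier type $B$ Schur-positive.
   Context: $B_n$: signed permutations $w=[w_1,\ldots,w_n]$ of $\{\pm1,\ldots,\pm n\}$ with Coxeter generators $s_0=[-1,2,\ldots,n]$, $s_i=[1,\ldots,i+1,i,\ldots,n]$; $\mathrm{FC}(B_n)$ = fully commutative elements (any two reduced expressions related by commutation relations only). $\mathrm{Neg}(w)=\{i\mid w_i<0\}$. Let $<_r$ be the order $-1<_r-2<_r\cdots<_r-n<_r1<_r2<_r\cdots<_rn$ and $\mathrm{rDes}(w)=\{1\le i<n\mid w_i>_rw_{i+1}\}$. With variable sets $X=(x_1,x_2,\ldots)$, $Y=(y_1,y_2,\ldots)$, Poirier's function is $F^P_w(X,Y)=\sum z_{i_1}\cdots z_{i_n}$ over $1\le i_1\le\cdots\le i_n$ with $i_j<i_{j+1}$ for $j\in\mathrm{rDes}(w)$, where $z_{i_j}=y_{i_j}$ if $j\in\mathrm{Neg}(w)$ and $z_{i_j}=x_{i_j}$ otherwise. A set $A\subseteq B_n$ is Poirier type $B$ Schur-positive if $\mathcal{Q}^P(A)=\sum_{w\in A}F^P_w(X,Y)$ is symmetric in $X$ and in $Y$ and is a non-negative linear combination of products $s_\lambda(X)s_\mu(Y)$ of Schur functions. *)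

theory Defs
  imports Complex_Main
begin

text \<open>A signed permutation w = [w_1,...,w_n] is represented as a function
  nat => int with w i = w_i for i in {1..n} and w i = i outside {1..n}.\<close>

definition signed_perms :: "nat \<Rightarrow> (nat \<Rightarrow> int) set" where
  "signed_perms n = {w. (\<forall>i. i \<notin> {1..n} \<longrightarrow> w i = int i)
      \<and> (\<forall>i\<in>{1..n}. w i \<noteq> 0)
      \<and> bij_betw (\<lambda>i. nat \<bar>w i\<bar>) {1..n} {1..n}}"

definition sapp :: "(nat \<Rightarrow> int) \<Rightarrow> int \<Rightarrow> int" where
  "sapp u j = (if 0 \<le> j then u (nat j) else - u (nat (- j)))"

definition scomp :: "(nat \<Rightarrow> int) \<Rightarrow> (nat \<Rightarrow> int) \<Rightarrow> nat \<Rightarrow> int" where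
  "scomp u v = (\<lambda>i. sapp u (v i))"

definition gen :: "nat \<Rightarrow> nat \<Rightarrow> int" where
  "gen k = (if k = 0 then (\<lambda>i. if i = 1 then -1 else int i)
            else (\<lambda>i. if i = k then int (k+1) else if i = k+1 then int k else int i))"

fun word_eval :: "nat list \<Rightarrow> nat \<Rightarrow> int" where
  "word_eval [] = (\<lambda>i. int i)"
| "word_eval (a # as) = scomp (gen a) (word_eval as)"

definition is_word :: "nat \<Rightarrow> nat list \<Rightarrow> bool" where
  "is_word n u \<longleftrightarrow> set u \<subseteq> {..<n}"

definition reduced_expr :: "nat \<Rightarrow> nat list \<Rightarrow> (nat \<Rightarrow> int) \<Rightarrow> bool" where
  "reduced_expr n u w \<longleftrightarrow> is_word n u \<and> word_eval u = w \<and>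
     (\<forall>v. is_word n v \<and> word_eval v = w \<longrightarrow> length u \<le> length v)"

definition comm_step :: "nat list \<Rightarrow> nat list \<Rightarrow> bool" where
  "comm_step u v \<longleftrightarrow> (\<exists>p q a b. u = p @ [a, b] @ q \<and> v = p @ [b, a] @ q \<and> a \<noteq> b \<and>
      scomp (gen a) (gen b) = scomp (gen b) (gen a))"

definition FC :: "nat \<Rightarrow> (nat \<Rightarrow> int) set" where
  "FC n = {w \<in> signed_perms n. \<forall>u v. reduced_expr n u w \<and> reduced_expr n v w \<longrightarrow> comm_step\<^sup>*\<^sup>* u v}"

definition Neg :: "nat \<Rightarrow> (nat \<Rightarrow> int) \<Rightarrow> nat set" where
  "Neg n w = {i \<in> {1..n}. w i < 0}"

text \<open>The order -1 <_r -2 <_r ... <_r -n <_r 1 <_r ... <_r n.\<close>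
definition rless :: "int \<Rightarrow> int \<Rightarrow> bool" where
  "rless a b \<longleftrightarrow> (a < 0 \<and> 0 < b) \<or> (a < 0 \<and> b < 0 \<and> - a < - b) \<or> (0 < a \<and> 0 < b \<and> a < b)"

definition rDes :: "nat \<Rightarrow> (nat \<Rightarrow> int) \<Rightarrow> nat set" where
  "rDes n w = {i. 1 \<le> i \<and> i < n \<and> rless (w (i+1)) (w i)}"

text \<open>Monomials in X and Y are pairs of exponent functions (alpha, beta); alpha k is the
  exponent of x_k (variables are indexed from 1). The coefficient of x^alpha y^beta in
  F^P_w is the number of index sequences i_1 <= ... <= i_n (i_j >= 1), strict at rDes(w),
  whose associated monomial z_{i_1} ... z_{i_n} equals x^alpha y^beta.\<close>
definition poirier_coeff :: "nat \<Rightarrow> (nat \<Rightarrow> int) \<Rightarrow> (nat \<Rightarrow> nat) \<Rightarrow> (nat \<Rightarrow> nat) \<Rightarrow> nat" where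
  "poirier_coeff n w \<alpha> \<beta> = card {ix :: nat \<Rightarrow> nat.
      (\<forall>j. j \<notin> {1..n} \<longrightarrow> ix j = 0) \<and> (\<forall>j\<in>{1..n}. 1 \<le> ix j)
    \<and> (\<forall>j. 1 \<le> j \<and> j < n \<longrightarrow> ix j \<le> ix (j+1))
    \<and> (\<forall>j\<in>rDes n w. ix j < ix (j+1))
    \<and> (\<forall>k. \<alpha> k = card {j \<in> {1..n}. j \<notin> Neg n w \<and> ix j = k})
    \<and> (\<forall>k. \<beta> k = card {j \<in> {1..n}. j \<in> Neg n w \<and> ix j = k})}"

definition QP_coeff :: "nat \<Rightarrow> (nat \<Rightarrow> int) set \<Rightarrow> (nat \<Rightarrow> nat) \<Rightarrow> (nat \<Rightarrow> nat) \<Rightarrow> nat" where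
  "QP_coeff n A \<alpha> \<beta> = (\<Sum>w\<in>A. poirier_coeff n w \<alpha> \<beta>)"

definition is_partition :: "nat list \<Rightarrow> bool" where
  "is_partition la \<longleftrightarrow> sorted_wrt (\<ge>) la \<and> (\<forall>x\<in>set la. 0 < x)"

definition cells :: "nat list \<Rightarrow> (nat \<times> nat) set" where
  "cells la = {(r, c). r < length la \<and> c < la ! r}"

definition is_ssyt :: "nat list \<Rightarrow> (nat \<times> nat \<Rightarrow> nat) \<Rightarrow> bool" where
  "is_ssyt la T \<longleftrightarrow> (\<forall>x. x \<notin> cells la \<longrightarrow> T x = 0) \<and> (\<forall>x\<in>cells la. 1 \<le> T x)
     \<and> (\<forall>r c. (r, c+1) \<in> cells la \<longrightarrow> T (r, c) \<le> T (r, c+1))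
     \<and> (\<forall>r c. (r+1, c) \<in> cells la \<longrightarrow> T (r, c) < T (r+1, c))"

definition schur_coeff :: "nat list \<Rightarrow> (nat \<Rightarrow> nat) \<Rightarrow> nat" where
  "schur_coeff la \<alpha> = card {T. is_ssyt la T \<and> (\<forall>k. \<alpha> k = card {x \<in> cells la. T x = k})}"

text \<open>Symmetry in X (resp. Y): invariance under every permutation of the variables x_1, x_2, ...\<close>
definition poirier_schur_positive :: "nat \<Rightarrow> (nat \<Rightarrow> int) set \<Rightarrow> bool" where
  "poirier_schur_positive n A \<longleftrightarrow>
     (\<forall>\<sigma> \<alpha> \<beta>. bij \<sigma> \<and> \<sigma> 0 = 0 \<longrightarrow> QP_coeff n A (\<alpha> \<circ> \<sigma>) \<beta> = QP_coeff n A \<alpha> \<beta>)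
   \<and> (\<forall>\<sigma> \<alpha> \<beta>. bij \<sigma> \<and> \<sigma> 0 = 0 \<longrightarrow> QP_coeff n A \<alpha> (\<beta> \<circ> \<sigma>) = QP_coeff n A \<alpha> \<beta>)
   \<and> (\<exists>S c. finite S \<and> (\<forall>p\<in>S. is_partition (fst p) \<and> is_partition (snd p))
        \<and> (\<forall>p\<in>S. (0::real) \<le> c p)
        \<and> (\<forall>\<alpha> \<beta>. real (QP_coeff n A \<alpha> \<beta>) =
              (\<Sum>p\<in>S. c p * real (schur_coeff (fst p) \<alpha>) * real (schur_coeff (snd p) \<beta>))))"

end

theory Submission
  imports Defs
begin


definition sw :: "nat \<Rightarrow> (nat \<Rightarrow> int) \<Rightarrow> nat \<Rightarrow> int" where
  "sw a w = scomp (gen a) w"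

definition tau :: "nat \<Rightarrow> int \<Rightarrow> int" where
  "tau a x = (if a = 0 then (if x = 1 then -1 else if x = -1 then 1 else x)
     else (if x = int a then int a + 1 else if x = int a + 1 then int a
       else if x = - int a then - int a - 1 else if x = - int a - 1 then - int a else x))"

lemma sapp_gen: "sapp (gen a) x = tau a x"
  unfolding sapp_def gen_def tau_def
  by (cases "x \<ge> 0") (simp_all add: nat_eq_iff)

lemma sw_apply: "sw a w i = tau a (w i)"
  by (simp add: sw_def scomp_def sapp_gen)

lemma tau_tau: "tau a (tau a x) = x"
  by (auto simp: tau_def)

lemma sw_sw: "sw a (sw a w) = w"
  by (rule ext) (simp add: sw_apply tau_tau)

lemma tau_abs: "nat \<bar>tau a x\<bar> = (if a = 0 then nat \<bar>x\<bar> else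
   (if nat \<bar>x\<bar> = a then a + 1 else if nat \<bar>x\<bar> = a+1 then a else nat \<bar>x\<bar>))"
  unfolding tau_def by (cases "x \<ge> 0"; simp; linarith)

lemma tau_nz: "x \<noteq> 0 \<Longrightarrow> tau a x \<noteq> 0"
  by (auto simp: tau_def)

lemma SP_sw:
  assumes w: "w \<in> signed_perms n" and a: "a < n"
  shows "sw a w \<in> signed_perms n"
proof -
  have out: "\<forall>i. i \<notin> {1..n} \<longrightarrow> w i = int i" and nz: "\<forall>i\<in>{1..n}. w i \<noteq> 0"
    and bj: "bij_betw (\<lambda>i. nat \<bar>w i\<bar>) {1..n} {1..n}" using w by (auto simp: signed_perms_def)
  define f where "f = (\<lambda>v::nat. if a = 0 then v else if v = a then a+1 else if v = a+1 then a else v)"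
  have bf: "bij_betw f {1..n} {1..n}"
    by (rule bij_betw_byWitness[where f'=f]) (use a in \<open>auto simp: f_def\<close>)
  have eq: "(\<lambda>i. nat \<bar>sw a w i\<bar>) = f \<circ> (\<lambda>i. nat \<bar>w i\<bar>)"
    by (rule ext) (simp add: sw_apply tau_abs f_def)
  have "bij_betw (\<lambda>i. nat \<bar>sw a w i\<bar>) {1..n} {1..n}"
    unfolding eq by (rule bij_betw_trans[OF bj bf])
  moreover have "\<forall>i. i \<notin> {1..n} \<longrightarrow> sw a w i = int i"
  proof (intro allI impI)
    fix i assume "i \<notin> {1..n}"
    then have "i = 0 \<or> n < i" by auto
    then show "sw a w i = int i" using out \<open>i \<notin> {1..n}\<close> a by (auto simp: sw_apply tau_def)
  qed
  moreover have "\<forall>i\<in>{1..n}. sw a w i \<noteq> 0" using nz by (simp add: sw_apply tau_nz)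
  ultimately show ?thesis by (simp add: signed_perms_def)
qed

lemma SP_inj:
  assumes "w \<in> signed_perms n" "i \<in> {1..n}" "j \<in> {1..n}" "\<bar>w i\<bar> = \<bar>w j\<bar>"
  shows "i = j"
proof -
  have "inj_on (\<lambda>i. nat \<bar>w i\<bar>) {1..n}" using assms(1) by (auto simp: signed_perms_def bij_betw_def)
  from inj_onD[OF this, of i j] show ?thesis using assms(2-4) by simp
qed

lemma SP_pos:
  assumes "w \<in> signed_perms n" "v \<in> {1..n}"
  shows "\<exists>p\<in>{1..n}. \<bar>w p\<bar> = int v"
proof -
  have "(\<lambda>i. nat \<bar>w i\<bar>) ` {1..n} = {1..n}" using assms(1) by (auto simp: signed_perms_def bij_betw_def)
  then have "v \<in> (\<lambda>i. nat \<bar>w i\<bar>) ` {1..n}" using assms(2) by simp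
  then obtain p where "p \<in> {1..n}" "v = nat \<bar>w p\<bar>" by blast
  then show ?thesis by (intro bexI[of _ p]) auto
qed

lemma SP_out: "w \<in> signed_perms n \<Longrightarrow> i \<notin> {1..n} \<Longrightarrow> w i = int i"
  by (auto simp: signed_perms_def)

lemma SP_nz: "w \<in> signed_perms n \<Longrightarrow> i \<in> {1..n} \<Longrightarrow> w i \<noteq> 0"
  by (auto simp: signed_perms_def)

lemma SP_le: "w \<in> signed_perms n \<Longrightarrow> i \<in> {1..n} \<Longrightarrow> \<bar>w i\<bar> \<le> int n"
proof -
  assume w: "w \<in> signed_perms n" and i: "i \<in> {1..n}"
  have "(\<lambda>i. nat \<bar>w i\<bar>) ` {1..n} = {1..n}" using w by (auto simp: signed_perms_def bij_betw_def)
  then have "nat \<bar>w i\<bar> \<in> {1..n}" using i by blast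
  then show ?thesis by auto
qed

definition Iset :: "nat \<Rightarrow> (nat \<Rightarrow> int) \<Rightarrow> (nat \<times> nat \<times> bool) set" where
  "Iset n w = {(i,j,t). 1 \<le> i \<and> i \<le> j \<and> j \<le> n \<and> (if t then w i + w j < 0 else i < j \<and> w j < w i)}"

definition Lw :: "nat \<Rightarrow> (nat \<Rightarrow> int) \<Rightarrow> nat" where
  "Lw n w = card (Iset n w)"

lemma finite_Iset: "finite (Iset n w)"
proof -
  have "Iset n w \<subseteq> {0..n} \<times> {0..n} \<times> UNIV" by (auto simp: Iset_def)
  then show ?thesis by (rule finite_subset) auto
qed

lemma tau_off: "a \<noteq> 0 \<Longrightarrow> tau a x = x + (if x = int a then 1 else if x = int a + 1 then -1
   else if x = - int a then -1 else if x = - int a - 1 then 1 else 0)"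
  unfolding tau_def by auto

lemma tau_cmp:
  assumes "1 \<le> a" "\<not> ((\<bar>x\<bar> = int a \<and> \<bar>y\<bar> = int a + 1) \<or> (\<bar>x\<bar> = int a + 1 \<and> \<bar>y\<bar> = int a))"
  shows "(tau a y < tau a x \<longleftrightarrow> y < x) \<and> (tau a x + tau a y < 0 \<longleftrightarrow> x + y < 0)"
proof -
  have a: "a \<noteq> 0" using assms by auto
  define A where "A = int a"
  have A: "A \<ge> 1" using assms by (simp add: A_def)
  define dx where "dx = (if x = A then 1 else if x = A + 1 then -1
   else if x = - A then -1 else if x = - A - 1 then 1 else (0::int))"
  define dy where "dy = (if y = A then 1 else if y = A + 1 then -1
   else if y = - A then -1 else if y = - A - 1 then 1 else (0::int))"
  have tx: "tau a x = x + dx" "tau a y = y + dy" using tau_off[OF a] by (simp_all add: dx_def dy_def A_def)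
  have c: "\<not> ((\<bar>x\<bar> = A \<and> \<bar>y\<bar> = A + 1) \<or> (\<bar>x\<bar> = A + 1 \<and> \<bar>y\<bar> = A))" using assms by (simp add: A_def)
  have xc: "x = A \<or> x = A+1 \<or> x = -A \<or> x = -A-1 \<or> (x \<noteq> A \<and> x \<noteq> A+1 \<and> x \<noteq> -A \<and> x \<noteq> -A-1)" by blast
  have yc: "y = A \<or> y = A+1 \<or> y = -A \<or> y = -A-1 \<or> (y \<noteq> A \<and> y \<noteq> A+1 \<and> y \<noteq> -A \<and> y \<noteq> -A-1)" by blast
  have "(y + dy < x + dx \<longleftrightarrow> y < x) \<and> (x + dx + (y + dy) < 0 \<longleftrightarrow> x + y < 0)"
    using xc yc A c unfolding dx_def dy_def by (elim disjE conjE; simp; arith)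
  then show ?thesis by (simp add: tx)
qed

lemma tau0_cmp:
  assumes "\<not> (\<bar>x\<bar> = 1 \<and> \<bar>y\<bar> = 1)" "x \<noteq> 0" "y \<noteq> 0"
  shows "(tau 0 y < tau 0 x \<longleftrightarrow> y < x) \<and> (tau 0 x + tau 0 y < 0 \<longleftrightarrow> x + y < 0)"
  using assms unfolding tau_def by (smt (verit))




lemma Iset_sw:
  assumes w: "w \<in> signed_perms n" and a: "1 \<le> a" "a < n"
    and p: "p \<in> {1..n}" "\<bar>w p\<bar> = int a" and q: "q \<in> {1..n}" "\<bar>w q\<bar> = int a + 1"
  shows "x \<in> Iset n (sw a w) \<longleftrightarrow> (x \<in> Iset n w) \<noteq> (x = (min p q, max p q, (w p < 0) \<noteq> (w q < 0)))"
proof -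
  obtain i j t where x: "x = (i,j,t)" by (cases x)
  have pq: "p \<noteq> q" using p q by auto
  show ?thesis
  proof (cases "1 \<le> i \<and> i \<le> j \<and> j \<le> n")
    case False
    then show ?thesis using p q x by (auto simp: Iset_def min_def max_def)
  next
    case True
    then have ij: "i \<in> {1..n}" "j \<in> {1..n}" by auto
    show ?thesis
    proof (cases "(i = p \<and> j = q) \<or> (i = q \<and> j = p)")
      case True
      have s1: "w p = int a \<or> w p = - int a" using p by auto
      have s2: "w q = int a + 1 \<or> w q = - int a - 1" using q by auto
      have "a \<noteq> 0" using a by auto
      then have tv: "tau a (int a) = int a + 1" "tau a (int a + 1) = int a" "tau a (- int a) = - int a - 1"
        "tau a (- int a - 1) = - int a" by (auto simp: tau_def)
      have ij2: "i < j" using True \<open>1 \<le> i \<and> i \<le> j \<and> j \<le> n\<close> pq by auto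
      have mm: "min p q = i" "max p q = j" using True ij2 by auto
      show ?thesis unfolding x mm using True ij2 \<open>1 \<le> i \<and> i \<le> j \<and> j \<le> n\<close> s1 s2 a
        by (elim disjE conjE; cases t; simp add: Iset_def sw_apply tv)
    next
      case False
      have h1: "\<bar>w i\<bar> = int a \<Longrightarrow> i = p" using SP_inj[OF w ij(1) p(1)] p(2) by simp
      have h2: "\<bar>w j\<bar> = int a + 1 \<Longrightarrow> j = q" using SP_inj[OF w ij(2) q(1)] q(2) by simp
      have h3: "\<bar>w i\<bar> = int a + 1 \<Longrightarrow> i = q" using SP_inj[OF w ij(1) q(1)] q(2) by simp
      have h4: "\<bar>w j\<bar> = int a \<Longrightarrow> j = p" using SP_inj[OF w ij(2) p(1)] p(2) by simp
      have nc: "\<not> ((\<bar>w i\<bar> = int a \<and> \<bar>w j\<bar> = int a + 1) \<or> (\<bar>w i\<bar> = int a + 1 \<and> \<bar>w j\<bar> = int a))"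
        using False h1 h2 h3 h4 by blast
      have ne: "(i, j) \<noteq> (min p q, max p q)" using False pq by (auto simp: min_def max_def split: if_splits)
      show ?thesis using tau_cmp[OF a(1) nc] ne unfolding x
        by (auto simp: Iset_def sw_apply)
    qed
  qed
qed

lemma Iset_sw0:
  assumes w: "w \<in> signed_perms n" and p: "p \<in> {1..n}" "\<bar>w p\<bar> = 1"
  shows "x \<in> Iset n (sw 0 w) \<longleftrightarrow> (x \<in> Iset n w) \<noteq> (x = (p, p, True))"
proof -
  obtain i j t where x: "x = (i,j,t)" by (cases x)
  show ?thesis
  proof (cases "1 \<le> i \<and> i \<le> j \<and> j \<le> n")
    case False
    then show ?thesis using p x by (auto simp: Iset_def)
  next
    case True
    then have ij: "i \<in> {1..n}" "j \<in> {1..n}" by auto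
    show ?thesis
    proof (cases "i = p \<and> j = p")
      case True
      have s1: "w p = 1 \<or> w p = - 1" using p by auto
      show ?thesis using True s1 \<open>1 \<le> i \<and> i \<le> j \<and> j \<le> n\<close> unfolding x
        by (auto simp: Iset_def sw_apply tau_def)
    next
      case False
      have h1: "\<bar>w i\<bar> = 1 \<Longrightarrow> i = p" using SP_inj[OF w ij(1) p(1)] p(2) by simp
      have h2: "\<bar>w j\<bar> = 1 \<Longrightarrow> j = p" using SP_inj[OF w ij(2) p(1)] p(2) by simp
      have nc: "\<not> (\<bar>w i\<bar> = 1 \<and> \<bar>w j\<bar> = 1)"
        using False h1 h2 by blast
      show ?thesis using tau0_cmp[OF nc SP_nz[OF w ij(1)] SP_nz[OF w ij(2)]] False unfolding x
        by (auto simp: Iset_def sw_apply)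
    qed
  qed
qed

lemma card_flip:
  assumes "finite A" "\<forall>x. x \<in> B \<longleftrightarrow> (x \<in> A) \<noteq> (x = e)"
  shows "card B = (if e \<in> A then card A - 1 else Suc (card A))"
proof (cases "e \<in> A")
  case True
  then have "B = A - {e}" using assms(2) by auto
  then show ?thesis using True by simp
next
  case False
  then have "B = insert e A" using assms(2) by auto
  then show ?thesis using False assms(1) by simp
qed

definition desc :: "nat \<Rightarrow> nat \<Rightarrow> (nat \<Rightarrow> int) \<Rightarrow> bool" where
  "desc n a w \<longleftrightarrow> Lw n (sw a w) < Lw n w"

lemma Lw_sw:
  assumes w: "w \<in> signed_perms n" and a: "1 \<le> a" "a < n"
    and p: "p \<in> {1..n}" "\<bar>w p\<bar> = int a" and q: "q \<in> {1..n}" "\<bar>w q\<bar> = int a + 1"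
  defines "c \<equiv> (if (w p < 0) = (w q < 0) then (if p < q then w q < w p else w p < w q) else w p + w q < 0)"
  shows "Lw n (sw a w) = (if c then Lw n w - 1 else Suc (Lw n w))" and "c \<Longrightarrow> Lw n w \<ge> 1"
proof -
  have pq: "p \<noteq> q" using p q by auto
  let ?e = "(min p q, max p q, (w p < 0) \<noteq> (w q < 0))"
  have ce: "?e \<in> Iset n w \<longleftrightarrow> c" using p q pq unfolding c_def
    by (auto simp: Iset_def min_def max_def)
  have cf: "card (Iset n (sw a w)) = (if ?e \<in> Iset n w then card (Iset n w) - 1 else Suc (card (Iset n w)))"
    by (rule card_flip[OF finite_Iset]) (use Iset_sw[OF w a p q] in blast)
  show "Lw n (sw a w) = (if c then Lw n w - 1 else Suc (Lw n w))" using cf ce by (simp add: Lw_def)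
  show "c \<Longrightarrow> Lw n w \<ge> 1"
  proof -
    assume c
    then have "Iset n w \<noteq> {}" using ce by auto
    then show ?thesis by (simp add: Lw_def finite_Iset Suc_le_eq card_gt_0_iff)
  qed
qed

lemma Lw_sw0:
  assumes w: "w \<in> signed_perms n" and p: "p \<in> {1..n}" "\<bar>w p\<bar> = 1"
  shows "Lw n (sw 0 w) = (if w p < 0 then Lw n w - 1 else Suc (Lw n w))" and "w p < 0 \<Longrightarrow> Lw n w \<ge> 1"
proof -
  have ce: "(p,p,True) \<in> Iset n w \<longleftrightarrow> w p < 0" using p by (auto simp: Iset_def)
  have cf: "card (Iset n (sw 0 w)) = (if (p,p,True) \<in> Iset n w then card (Iset n w) - 1 else Suc (card (Iset n w)))"
    by (rule card_flip[OF finite_Iset]) (use Iset_sw0[OF w p] in blast)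
  show "Lw n (sw 0 w) = (if w p < 0 then Lw n w - 1 else Suc (Lw n w))" using cf ce by (simp add: Lw_def)
  show "w p < 0 \<Longrightarrow> Lw n w \<ge> 1"
  proof -
    assume "w p < 0"
    then have "Iset n w \<noteq> {}" using ce by auto
    then show ?thesis by (simp add: Lw_def finite_Iset Suc_le_eq card_gt_0_iff)
  qed
qed

lemma desc_crit:
  assumes w: "w \<in> signed_perms n" and a: "1 \<le> a" "a < n"
    and p: "p \<in> {1..n}" "\<bar>w p\<bar> = int a" and q: "q \<in> {1..n}" "\<bar>w q\<bar> = int a + 1"
  shows "desc n a w \<longleftrightarrow> (if (w p < 0) = (w q < 0) then (if p < q then w q < w p else w p < w q) else w p + w q < 0)"
    (is "_ \<longleftrightarrow> ?c")
proof (cases ?c)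
  case True
  have h1: "Lw n (sw a w) = Lw n w - 1" using True Lw_sw(1)[OF w a p q] by simp
  have h2: "Lw n w \<ge> 1" using Lw_sw(2)[OF w a p q True] .
  show ?thesis using True h1 h2 unfolding desc_def by simp
next
  case False
  then show ?thesis using Lw_sw(1)[OF w a p q] unfolding desc_def by simp
qed

lemma desc_crit0:
  assumes w: "w \<in> signed_perms n" and p: "p \<in> {1..n}" "\<bar>w p\<bar> = 1"
  shows "desc n 0 w \<longleftrightarrow> w p < 0"
proof (cases "w p < 0")
  case True
  have h1: "Lw n (sw 0 w) = Lw n w - 1" using True Lw_sw0(1)[OF w p] by simp
  have h2: "Lw n w \<ge> 1" using Lw_sw0(2)[OF w p True] .
  show ?thesis using True h1 h2 unfolding desc_def by simp
next
  case False
  then show ?thesis using Lw_sw0(1)[OF w p] unfolding desc_def by simp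
qed

lemma Lw_sw_le:
  assumes w: "w \<in> signed_perms n" and a: "a < n"
  shows "Lw n (sw a w) \<le> Suc (Lw n w)" and "Lw n w \<le> Suc (Lw n (sw a w))"
    and "desc n a w \<Longrightarrow> Suc (Lw n (sw a w)) = Lw n w"
    and "\<not> desc n a w \<Longrightarrow> Lw n (sw a w) = Suc (Lw n w)"
proof -
  have "Lw n (sw a w) = Lw n w - 1 \<and> Lw n w \<ge> 1 \<or> Lw n (sw a w) = Suc (Lw n w)"
  proof (cases "a = 0")
    case True
    obtain p where p: "p \<in> {1..n}" "\<bar>w p\<bar> = int 1" using SP_pos[OF w, of 1] a by auto
    show ?thesis using Lw_sw0[OF w p(1)] p True by auto
  next
    case False
    obtain p where p: "p \<in> {1..n}" "\<bar>w p\<bar> = int a" using SP_pos[OF w, of a] a False by auto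
    obtain q where q: "q \<in> {1..n}" "\<bar>w q\<bar> = int (a+1)" using SP_pos[OF w, of "a+1"] a by auto
    show ?thesis using Lw_sw[OF w _ a p] q False by (auto split: if_splits)
  qed
  then show "Lw n (sw a w) \<le> Suc (Lw n w)" and "Lw n w \<le> Suc (Lw n (sw a w))"
    and "desc n a w \<Longrightarrow> Suc (Lw n (sw a w)) = Lw n w"
    and "\<not> desc n a w \<Longrightarrow> Lw n (sw a w) = Suc (Lw n w)" unfolding desc_def by auto
qed




definition idp :: "nat \<Rightarrow> int" where "idp = (\<lambda>i. int i)"

lemma idp_SP: "idp \<in> signed_perms n"
  unfolding signed_perms_def idp_def by (auto intro!: bij_betw_byWitness[where f'="\<lambda>i. i"])

lemma Lw_idp: "Lw n idp = 0"
proof -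
  have "Iset n idp = {}" by (auto simp: Iset_def idp_def)
  then show ?thesis by (simp add: Lw_def)
qed

lemma word_eval_Cons: "word_eval (a # u) = sw a (word_eval u)"
  by (simp add: sw_def)

lemma word_eval_Nil: "word_eval [] = idp"
  by (simp add: idp_def)

declare word_eval.simps[simp del]

lemma word_SP: "is_word n u \<Longrightarrow> word_eval u \<in> signed_perms n"
proof (induction u)
  case Nil then show ?case by (simp add: word_eval_Nil idp_SP)
next
  case (Cons a u)
  then have "a < n" "is_word n u" by (auto simp: is_word_def)
  then show ?case using Cons.IH SP_sw by (simp add: word_eval_Cons)
qed

lemma Lw_word: "is_word n u \<Longrightarrow> Lw n (word_eval u) \<le> length u"
proof (induction u)
  case Nil then show ?case by (simp add: word_eval_Nil Lw_idp)
next
  case (Cons a u)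
  then have a: "a < n" and u: "is_word n u" by (auto simp: is_word_def)
  have "Lw n (sw a (word_eval u)) \<le> Suc (Lw n (word_eval u))"
    using Lw_sw_le(1)[OF word_SP[OF u] a] .
  then show ?case using Cons.IH[OF u] by (simp add: word_eval_Cons)
qed

lemma no_desc_idp:
  assumes w: "w \<in> signed_perms n" and nd: "\<forall>a<n. \<not> desc n a w"
  shows "w = idp"
proof -
  define P where "P v = (SOME p. p \<in> {1..n} \<and> \<bar>w p\<bar> = int v)" for v
  have P: "P v \<in> {1..n} \<and> \<bar>w (P v)\<bar> = int v" if "v \<in> {1..n}" for v
    unfolding P_def using someI_ex[OF SP_pos[OF w that, unfolded Bex_def]] by blast
  have pos: "w (P v) > 0 \<and> (v < n \<longrightarrow> P v < P (Suc v))" if "v \<in> {1..n}" for v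
    using that
  proof (induction v)
    case 0 then show ?case by simp
  next
    case (Suc v)
    have sv: "Suc v \<in> {1..n}" using Suc.prems .
    have posv: "w (P (Suc v)) > 0"
    proof (cases v)
      case 0
      have "\<not> desc n 0 w" using nd Suc.prems by auto
      then have "\<not> w (P 1) < 0" using desc_crit0[OF w, of "P 1"] P[of 1] Suc.prems by auto
      moreover have "w (P 1) \<noteq> 0" using SP_nz[OF w] P[of 1] Suc.prems by auto
      ultimately show ?thesis using 0 by simp
    next
      case (Suc m)
      then have vn: "v \<in> {1..n}" "v < n" using sv by auto
      then have IH: "w (P v) > 0" "P v < P (Suc v)" using Suc.IH by auto
      have "\<not> desc n v w" using nd vn by auto
      then have c: "\<not> (if (w (P v) < 0) = (w (P (Suc v)) < 0) then (if P v < P (Suc v) then w (P (Suc v)) < w (P v) else w (P v) < w (P (Suc v))) else w (P v) + w (P (Suc v)) < 0)"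
        using desc_crit[OF w _ vn(2), of "P v" "P (Suc v)"] P[OF vn(1)] P[OF sv] Suc by auto
      have a1: "\<bar>w (P v)\<bar> = int v" "\<bar>w (P (Suc v))\<bar> = int v + 1" using P[OF vn(1)] P[OF sv] by auto
      show ?thesis
      proof (rule ccontr)
        assume "\<not> w (P (Suc v)) > 0"
        then have "w (P (Suc v)) < 0" using SP_nz[OF w] P[OF sv] by force
        then show False using c IH(1) a1 by (auto split: if_splits)
      qed
    qed
    have "P (Suc v) < P (Suc (Suc v))" if "Suc v < n"
    proof -
      have sv2: "Suc (Suc v) \<in> {1..n}" using that by auto
      have "\<not> desc n (Suc v) w" using nd that by auto
      then have c: "\<not> (if (w (P (Suc v)) < 0) = (w (P (Suc (Suc v))) < 0) then (if P (Suc v) < P (Suc (Suc v)) then w (P (Suc (Suc v))) < w (P (Suc v)) else w (P (Suc v)) < w (P (Suc (Suc v)))) else w (P (Suc v)) + w (P (Suc (Suc v))) < 0)"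
        using desc_crit[OF w _ that, of "P (Suc v)" "P (Suc (Suc v))"] P[OF sv] P[OF sv2] by auto
      have a1: "\<bar>w (P (Suc v))\<bar> = int v + 1" "\<bar>w (P (Suc (Suc v)))\<bar> = int v + 2" using P[OF sv] P[OF sv2] by auto
      have ne: "P (Suc v) \<noteq> P (Suc (Suc v))" using a1 by auto
      show ?thesis using c posv a1 ne by (auto split: if_splits)
    qed
    then show ?case using posv by auto
  qed
  have ge: "P v \<ge> v" if "v \<in> {1..n}" for v
    using that
  proof (induction v)
    case 0 then show ?case by simp
  next
    case (Suc v)
    show ?case
    proof (cases v)
      case 0 then show ?thesis using P[OF Suc.prems] by auto
    next
      case (Suc m)
      then have "v \<in> {1..n}" "v < n" using Suc.prems by auto
      then show ?thesis using Suc.IH pos[of v] by auto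
    qed
  qed
  have le: "P (n - d) \<le> n - d" if "d < n" for d
    using that
  proof (induction d)
    case 0 then show ?case using P[of n] by auto
  next
    case (Suc d)
    have "n - Suc d \<in> {1..n}" "n - Suc d < n" using Suc.prems by auto
    then have "P (n - Suc d) < P (Suc (n - Suc d))" using pos by blast
    moreover have "Suc (n - Suc d) = n - d" using Suc.prems by auto
    ultimately show ?case using Suc.IH Suc.prems by auto
  qed
  have Pv: "P v = v" if "v \<in> {1..n}" for v
    using ge[OF that] le[of "n - v"] that by auto
  show ?thesis
  proof (rule ext)
    fix i
    show "w i = idp i"
    proof (cases "i \<in> {1..n}")
      case True
      have "w (P i) > 0" "\<bar>w (P i)\<bar> = int i" using pos[OF True] P[OF True] by auto
      then show ?thesis using Pv[OF True] by (simp add: idp_def)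
    next
      case False
      then show ?thesis using SP_out[OF w] by (simp add: idp_def)
    qed
  qed
qed

lemma gen_word:
  assumes "w \<in> signed_perms n"
  shows "\<exists>u. is_word n u \<and> word_eval u = w \<and> length u = Lw n w"
  using assms
proof (induction "Lw n w" arbitrary: w rule: less_induct)
  case less
  show ?case
  proof (cases "w = idp")
    case True
    then show ?thesis by (intro exI[of _ "[]"]) (simp add: is_word_def word_eval_Nil Lw_idp)
  next
    case False
    then obtain a where a: "a < n" "desc n a w" using no_desc_idp[OF less.prems] by blast
    have s: "sw a w \<in> signed_perms n" using SP_sw[OF less.prems a(1)] .
    have L: "Suc (Lw n (sw a w)) = Lw n w" using Lw_sw_le(3)[OF less.prems a(1) a(2)] .
    obtain u where u: "is_word n u" "word_eval u = sw a w" "length u = Lw n (sw a w)"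
      using less.hyps[OF _ s] L by auto
    show ?thesis
      by (rule exI[of _ "a # u"]) (use u a L in \<open>auto simp: is_word_def word_eval_Cons sw_sw\<close>)
  qed
qed

lemma reduced_iff:
  "reduced_expr n u w \<longleftrightarrow> is_word n u \<and> word_eval u = w \<and> length u = Lw n w"
proof
  assume r: "reduced_expr n u w"
  then have u: "is_word n u" "word_eval u = w" by (auto simp: reduced_expr_def)
  then have w: "w \<in> signed_perms n" using word_SP by blast
  obtain v where v: "is_word n v" "word_eval v = w" "length v = Lw n w" using gen_word[OF w] by blast
  have "length u \<le> length v" using r v by (auto simp: reduced_expr_def)
  moreover have "Lw n w \<le> length u" using Lw_word[OF u(1)] u(2) by simp
  ultimately show "is_word n u \<and> word_eval u = w \<and> length u = Lw n w" using u v by simp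
next
  assume h: "is_word n u \<and> word_eval u = w \<and> length u = Lw n w"
  show "reduced_expr n u w" unfolding reduced_expr_def
    using h Lw_word by fastforce
qed




definition commutes :: "nat \<Rightarrow> nat \<Rightarrow> bool" where
  "commutes a b \<longleftrightarrow> scomp (gen a) (gen b) = scomp (gen b) (gen a)"

definition restr :: "nat \<Rightarrow> nat \<Rightarrow> nat list \<Rightarrow> nat list" where
  "restr c d u = filter (\<lambda>x. x = c \<or> x = d) u"

lemma gen_tau: "gen b i = tau b (int i)"
  using sapp_gen[of b "int i"] by (simp add: sapp_def)

lemma scomp_gen: "scomp (gen a) (gen b) i = tau a (tau b (int i))"
  by (simp add: scomp_def sapp_gen gen_tau)

definition supp :: "nat \<Rightarrow> int set" where
  "supp a = (if a = 0 then {1, -1} else {int a, int a + 1, - int a, - int a - 1})"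

lemma tau_out: "x \<notin> supp a \<Longrightarrow> tau a x = x"
  unfolding tau_def supp_def by (auto split: if_splits)

lemma tau_in: "x \<in> supp a \<Longrightarrow> tau a x \<in> supp a"
  unfolding supp_def by (cases "a = 0") (auto simp: tau_def)

lemma supp_disj: "a + 2 \<le> b \<or> b + 2 \<le> a \<Longrightarrow> supp a \<inter> supp b = {}"
  unfolding supp_def by auto

lemma tau_comm: "a + 2 \<le> b \<or> b + 2 \<le> a \<Longrightarrow> tau a (tau b x) = tau b (tau a x)"
proof -
  assume f: "a + 2 \<le> b \<or> b + 2 \<le> a"
  note d = supp_disj[OF f]
  show ?thesis
  proof (cases "x \<in> supp a")
    case True
    then have "tau a x \<in> supp a" by (rule tau_in)
    then have "tau a x \<notin> supp b" "x \<notin> supp b" using True d by auto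
    then show ?thesis by (simp add: tau_out)
  next
    case False
    show ?thesis
    proof (cases "x \<in> supp b")
      case True
      then have "tau b x \<in> supp b" by (rule tau_in)
      then have "tau b x \<notin> supp a" using d by auto
      then show ?thesis using False by (simp add: tau_out)
    next
      case False
      then show ?thesis using \<open>x \<notin> supp a\<close> by (simp add: tau_out)
    qed
  qed
qed

lemma commutes_far: assumes f: "a + 2 \<le> b \<or> b + 2 \<le> a" shows "commutes a b"
  unfolding commutes_def by (rule ext) (simp add: scomp_gen tau_comm[OF f])

lemma not_commutes_Suc: "\<not> commutes k (Suc k)"
proof
  assume c: "commutes k (Suc k)"
  show False
  proof (cases k)
    case 0
    have "scomp (gen 0) (gen 1) 1 = scomp (gen 1) (gen 0) 1" using c 0 by (simp add: commutes_def)
    then show False by (simp add: scomp_gen tau_def)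
  next
    case (Suc m)
    have "scomp (gen k) (gen (Suc k)) k = scomp (gen (Suc k)) (gen k) k" using c by (simp add: commutes_def)
    then show False using Suc by (simp add: scomp_gen tau_def)
  qed
qed

lemma commutes_sym: "commutes a b \<Longrightarrow> commutes b a"
  by (simp add: commutes_def)

lemma not_commutes_sym: "\<not> commutes a b \<Longrightarrow> \<not> commutes b a"
  by (simp add: commutes_def)

lemma not_commutes_neq: "\<not> commutes a b \<Longrightarrow> a \<noteq> b"
  by (auto simp: commutes_def)

lemma comm_step_restr:
  assumes "comm_step u v" "\<not> commutes c d"
  shows "restr c d u = restr c d v"
proof -
  obtain p q a b where uv: "u = p @ [a, b] @ q" "v = p @ [b, a] @ q" "a \<noteq> b"
    "scomp (gen a) (gen b) = scomp (gen b) (gen a)"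
    using assms(1) by (auto simp: comm_step_def)
  have ab: "commutes a b" using uv(4) by (simp add: commutes_def)
  have "\<not> ((a = c \<or> a = d) \<and> (b = c \<or> b = d))"
    using ab assms(2) uv(3) commutes_sym by blast
  then show ?thesis using uv by (auto simp: restr_def)
qed

lemma comm_rtr_restr:
  assumes "comm_step\<^sup>*\<^sup>* u v" "\<not> commutes c d"
  shows "restr c d u = restr c d v"
  using assms(1)
proof (induction rule: rtranclp_induct)
  case base then show ?case by simp
next
  case (step y z) then show ?case using comm_step_restr[OF step(2) assms(2)] by simp
qed

lemma comm_step_Cons: "comm_step u v \<Longrightarrow> comm_step (x # u) (x # v)"
  unfolding comm_step_def by (metis append_Cons)

lemma comm_rtr_Cons: "comm_step\<^sup>*\<^sup>* u v \<Longrightarrow> comm_step\<^sup>*\<^sup>* (x # u) (x # v)"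
proof (induction rule: rtranclp_induct)
  case base then show ?case by simp
next
  case (step y z) then show ?case using comm_step_Cons by (metis rtranclp.rtrancl_into_rtrancl)
qed

lemma comm_step_sym: "comm_step u v \<Longrightarrow> comm_step v u"
  unfolding comm_step_def by metis

lemma comm_rtr_sym: "comm_step\<^sup>*\<^sup>* u v \<Longrightarrow> comm_step\<^sup>*\<^sup>* v u"
proof (induction rule: rtranclp_induct)
  case base then show ?case by simp
next
  case (step y z) then show ?case using comm_step_sym by (metis converse_rtranclp_into_rtranclp)
qed

definition nonFC :: "nat \<Rightarrow> (nat \<Rightarrow> int) \<Rightarrow> bool" where
  "nonFC n w \<longleftrightarrow> (\<exists>u v c d. reduced_expr n u w \<and> reduced_expr n v w \<and> \<not> commutes c d \<and> restr c d u \<noteq> restr c d v)"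

lemma nonFC_notin: "nonFC n w \<Longrightarrow> w \<notin> FC n"
  unfolding nonFC_def FC_def using comm_rtr_restr by blast

lemma red_Cons:
  assumes "reduced_expr n (a # u) w"
  shows "a < n \<and> desc n a w \<and> reduced_expr n u (sw a w)"
proof -
  have h: "is_word n (a # u)" "sw a (word_eval u) = w" "Suc (length u) = Lw n w"
    using assms by (auto simp: reduced_iff word_eval_Cons)
  have a: "a < n" and u: "is_word n u" using h(1) by (auto simp: is_word_def)
  have e: "word_eval u = sw a w" using h(2) sw_sw by metis
  have w: "w \<in> signed_perms n" using word_SP[OF h(1)] h(2) by (simp add: word_eval_Cons)
  have "Lw n (sw a w) \<le> length u" using Lw_word[OF u] e by simp
  then have d: "desc n a w" using h(3) by (simp add: desc_def)
  have "Suc (Lw n (sw a w)) = Lw n w" using Lw_sw_le(3)[OF w a d] .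
  then show ?thesis using a d u e h(3) by (simp add: reduced_iff)
qed

lemma red_ConsI:
  assumes "w \<in> signed_perms n" "a < n" "desc n a w" "reduced_expr n u (sw a w)"
  shows "reduced_expr n (a # u) w"
proof -
  have "Suc (Lw n (sw a w)) = Lw n w" using Lw_sw_le(3)[OF assms(1-3)] .
  then show ?thesis using assms by (auto simp: reduced_iff word_eval_Cons sw_sw is_word_def)
qed

lemma exists_red: "w \<in> signed_perms n \<Longrightarrow> \<exists>u. reduced_expr n u w"
  using gen_word reduced_iff by blast

lemma nonFC_base:
  assumes w: "w \<in> signed_perms n" and ab: "a < n" "b < n" "desc n a w" "desc n b w" "\<not> commutes a b"
  shows "nonFC n w"
proof -
  obtain u where u: "reduced_expr n u (sw a w)" using exists_red SP_sw[OF w ab(1)] by blast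
  obtain v where v: "reduced_expr n v (sw b w)" using exists_red SP_sw[OF w ab(2)] by blast
  have "a \<noteq> b" using not_commutes_neq[OF ab(5)] .
  then have "restr a b (a # u) \<noteq> restr a b (b # v)" by (simp add: restr_def)
  then show ?thesis unfolding nonFC_def
    using red_ConsI[OF w ab(1) ab(3) u] red_ConsI[OF w ab(2) ab(4) v] ab(5) by blast
qed

lemma nonFC_step:
  assumes w: "w \<in> signed_perms n" and a: "a < n" "desc n a w" and nf: "nonFC n (sw a w)"
  shows "nonFC n w"
proof -
  obtain u v c d where h: "reduced_expr n u (sw a w)" "reduced_expr n v (sw a w)" "\<not> commutes c d"
    "restr c d u \<noteq> restr c d v" using nf by (auto simp: nonFC_def)
  have "restr c d (a # u) \<noteq> restr c d (a # v)" using h(4) by (auto simp: restr_def)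
  then show ?thesis unfolding nonFC_def
    using red_ConsI[OF w a h(1)] red_ConsI[OF w a h(2)] h(3) by blast
qed

lemma sw_comm: assumes f: "a + 2 \<le> b \<or> b + 2 \<le> a" shows "sw a (sw b w) = sw b (sw a w)"
  by (rule ext) (simp add: sw_apply tau_comm[OF f])

lemma FC_intro:
  assumes w: "w \<in> signed_perms n"
    and sub: "\<forall>a<n. desc n a w \<longrightarrow> sw a w \<in> FC n"
    and pair: "\<forall>a<n. \<forall>b<n. desc n a w \<and> desc n b w \<and> a \<noteq> b \<longrightarrow> (a + 2 \<le> b \<or> b + 2 \<le> a) \<and> desc n b (sw a w)"
  shows "w \<in> FC n"
  unfolding FC_def
proof (intro CollectI conjI allI impI, fact w)
  fix u v assume uv: "reduced_expr n u w \<and> reduced_expr n v w"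
  then have lu: "length u = length v" by (simp add: reduced_iff)
  show "comm_step\<^sup>*\<^sup>* u v"
  proof (cases u)
    case Nil
    then show ?thesis using lu by simp
  next
    case (Cons a u')
    then obtain b v' where v: "v = b # v'" using lu by (cases v) auto
    have A: "a < n" "desc n a w" "reduced_expr n u' (sw a w)" using red_Cons uv Cons by blast+
    have B: "b < n" "desc n b w" "reduced_expr n v' (sw b w)" using red_Cons uv v by blast+
    show ?thesis
    proof (cases "a = b")
      case True
      have "sw a w \<in> FC n" using sub A by blast
      then have "comm_step\<^sup>*\<^sup>* u' v'" using A(3) B(3) True by (auto simp: FC_def)
      then show ?thesis using Cons v True comm_rtr_Cons by blast
    next
      case False
      have far: "a + 2 \<le> b \<or> b + 2 \<le> a" and db: "desc n b (sw a w)" using pair A B False by blast+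
      have sa: "sw a w \<in> signed_perms n" using SP_sw[OF w A(1)] .
      obtain r where r: "reduced_expr n r (sw b (sw a w))" using exists_red SP_sw[OF sa B(1)] by blast
      have r1: "reduced_expr n (b # r) (sw a w)" using red_ConsI[OF sa B(1) db r] .
      have "sw a w \<in> FC n" using sub A by blast
      then have c1: "comm_step\<^sup>*\<^sup>* u' (b # r)" using A(3) r1 by (auto simp: FC_def)
      have sb: "sw b w \<in> signed_perms n" using SP_sw[OF w B(1)] .
      have eq: "sw b (sw a w) = sw a (sw b w)" using sw_comm[OF far] by simp
      have l1: "Suc (Lw n (sw a w)) = Lw n w" using Lw_sw_le(3)[OF w A(1) A(2)] .
      have l2: "Suc (Lw n (sw b w)) = Lw n w" using Lw_sw_le(3)[OF w B(1) B(2)] .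
      have r2: "reduced_expr n (a # r) (sw b w)"
        using r1 r eq l1 l2 A(1) by (auto simp: reduced_iff word_eval_Cons sw_sw is_word_def)
      have "sw b w \<in> FC n" using sub B by blast
      then have c2: "comm_step\<^sup>*\<^sup>* v' (a # r)" using B(3) r2 by (auto simp: FC_def)
      have st: "comm_step (a # b # r) (b # a # r)"
        unfolding comm_step_def using False commutes_far[OF far]
        by (intro exI[of _ "[]"] exI[of _ r] exI[of _ a] exI[of _ b]) (simp add: commutes_def)
      have "comm_step\<^sup>*\<^sup>* (a # u') (a # b # r)" using comm_rtr_Cons[OF c1] .
      also have "comm_step\<^sup>*\<^sup>* (a # b # r) (b # a # r)" using st by simp
      also have "comm_step\<^sup>*\<^sup>* (b # a # r) (b # v')" using comm_rtr_Cons[OF comm_rtr_sym[OF c2]] .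
      finally show ?thesis using Cons v by simp
    qed
  qed
qed

lemma idp_FC: "idp \<in> FC n"
  by (rule FC_intro) (auto simp: idp_SP desc_def Lw_idp)




definition midok :: "nat \<Rightarrow> (nat \<Rightarrow> int) \<Rightarrow> bool" where
  "midok n w \<longleftrightarrow> (\<forall>i. 2 \<le> i \<and> i \<le> n - 1 \<longrightarrow> w i > 0) \<and> (\<forall>i. 2 \<le> i \<and> i + 1 \<le> n - 1 \<longrightarrow> w i < w (i + 1))"

definition shapeA :: "nat \<Rightarrow> (nat \<Rightarrow> int) \<Rightarrow> nat \<Rightarrow> nat \<Rightarrow> bool" where
  "shapeA n w a b \<longleftrightarrow> w \<in> signed_perms n \<and> w 1 = - int a \<and> w n = - int b \<and> midok n w"

definition shapeC :: "nat \<Rightarrow> (nat \<Rightarrow> int) \<Rightarrow> nat \<Rightarrow> nat \<Rightarrow> bool" where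
  "shapeC n w a k \<longleftrightarrow> w \<in> signed_perms n \<and> w 1 = - int a \<and> w n = int k \<and> midok n w"

lemma mid_pos:
  assumes w: "w \<in> signed_perms n" and n: "n \<ge> 3" and m: "midok n w" and v: "v \<in> {1..n}"
    and v1: "\<bar>w 1\<bar> \<noteq> int v" and vn: "\<bar>w n\<bar> \<noteq> int v"
  shows "\<exists>p. 2 \<le> p \<and> p \<le> n - 1 \<and> w p = int v"
proof -
  obtain p where p: "p \<in> {1..n}" "\<bar>w p\<bar> = int v" using SP_pos[OF w v] by blast
  have "p \<noteq> 1" "p \<noteq> n" using p v1 vn by auto
  then have pp: "2 \<le> p" "p \<le> n - 1" using p by auto
  then have "w p > 0" using m by (auto simp: midok_def)
  then show ?thesis using pp p by (intro exI[of _ p]) auto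
qed

lemma midok_sw:
  assumes w: "w \<in> signed_perms n" and m: "midok n w" and k: "1 \<le> k"
    and nk: "\<forall>i. 2 \<le> i \<and> i \<le> n - 1 \<longrightarrow> w i \<noteq> int k + 1"
  shows "midok n (sw k w)"
proof -
  have pos: "sw k w i > 0" if "2 \<le> i" "i \<le> n - 1" for i
  proof -
    have "w i > 0" using m that by (auto simp: midok_def)
    then show ?thesis using k by (auto simp: sw_apply tau_def)
  qed
  have inc: "sw k w i < sw k w (i + 1)" if "2 \<le> i" "i + 1 \<le> n - 1" for i
  proof -
    have a: "w i > 0" "w (i+1) > 0" "w i < w (i+1)" using m that by (auto simp: midok_def)
    have b: "w i \<noteq> int k + 1" "w (i+1) \<noteq> int k + 1" using nk that by auto
    have "\<not> ((\<bar>w (i+1)\<bar> = int k \<and> \<bar>w i\<bar> = int k + 1) \<or> (\<bar>w (i+1)\<bar> = int k + 1 \<and> \<bar>w i\<bar> = int k))"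
      using a b by auto
    then show ?thesis using tau_cmp[OF k] a(3) by (simp add: sw_apply)
  qed
  show ?thesis using pos inc by (simp add: midok_def)
qed

lemma A_step:
  assumes n: "n \<ge> 3" and s: "shapeA n w a b" and b: "2 \<le> b" "b - 1 \<noteq> a"
  shows "b - 1 < n \<and> desc n (b - 1) w \<and> shapeA n (sw (b - 1) w) a (b - 1)"
proof -
  have w: "w \<in> signed_perms n" and w1: "w 1 = - int a" and wn: "w n = - int b" and m: "midok n w"
    using s by (auto simp: shapeA_def)
  have bn: "b \<le> n" using SP_le[OF w, of n] wn n by auto
  have an: "a \<le> n" "a \<ge> 1" using SP_le[OF w, of 1] SP_nz[OF w, of 1] w1 n by auto
  define k where "k = b - 1"
  have k: "1 \<le> k" "k < n" "int k + 1 = int b" using b bn by (auto simp: k_def)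
  have v: "k \<in> {1..n}" using k by auto
  have h1: "\<bar>w 1\<bar> \<noteq> int k" using w1 b by (auto simp: k_def)
  have h2: "\<bar>w n\<bar> \<noteq> int k" using wn k by auto
  obtain p where p: "2 \<le> p" "p \<le> n - 1" "w p = int k"
    using mid_pos[OF w n m v h1 h2] by blast
  have d: "desc n k w"
    using desc_crit[OF w k(1) k(2), of p n] p wn k n by auto
  have nk: "\<forall>i. 2 \<le> i \<and> i \<le> n - 1 \<longrightarrow> w i \<noteq> int k + 1"
  proof (intro allI impI)
    fix i assume i: "2 \<le> i \<and> i \<le> n - 1"
    show "w i \<noteq> int k + 1"
    proof
      assume "w i = int k + 1"
      then have "\<bar>w i\<bar> = \<bar>w n\<bar>" using wn k by simp
      then have "i = n" using SP_inj[OF w, of i n] i n by auto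
      then show False using i n by auto
    qed
  qed
  have ab: "a \<noteq> b"
  proof
    assume "a = b"
    then have "\<bar>w 1\<bar> = \<bar>w n\<bar>" using w1 wn by simp
    then show False using SP_inj[OF w, of 1 n] n by auto
  qed
  have s2: "shapeA n (sw k w) a k"
    unfolding shapeA_def using SP_sw[OF w k(2)] midok_sw[OF w m k(1) nk] w1 wn k b ab
    by (auto simp: sw_apply tau_def k_def)
  show ?thesis using s2 d k by (simp add: k_def)
qed

lemma A_base_lt:
  assumes n: "n \<ge> 3" and s: "shapeA n w a (a + 1)"
  shows "nonFC n w"
proof -
  have w: "w \<in> signed_perms n" and w1: "w 1 = - int a" and wn: "w n = - int (a + 1)" and m: "midok n w"
    using s by (auto simp: shapeA_def)
  have bn: "a + 1 \<le> n" using SP_le[OF w, of n] wn n by auto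
  have a1: "a \<ge> 1" using SP_nz[OF w, of 1] w1 n by auto
  have da: "desc n a w" using desc_crit[OF w a1, of 1 n] bn w1 wn n by auto
  show ?thesis
  proof (cases "a = 1")
    case True
    have d0: "desc n 0 w" using desc_crit0[OF w, of 1] w1 True n by auto
    show ?thesis using nonFC_base[OF w _ _ d0 da] True bn not_commutes_Suc[of 0] by auto
  next
    case False
    then have a2: "a \<ge> 2" using a1 by auto
    have v: "a - 1 \<in> {1..n}" using a2 bn by auto
    have h1: "\<bar>w 1\<bar> \<noteq> int (a - 1)" using w1 a2 by auto
    have h2: "\<bar>w n\<bar> \<noteq> int (a - 1)" using wn a2 by auto
    obtain p where p: "2 \<le> p" "p \<le> n - 1" "w p = int (a - 1)"
      using mid_pos[OF w n m v h1 h2] by blast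
    have d1: "desc n (a - 1) w" using desc_crit[OF w, of "a - 1" p 1] p w1 a2 bn n by auto
    have "\<not> commutes (a - 1) a" using not_commutes_Suc[of "a - 1"] a2 by simp
    then show ?thesis using nonFC_base[OF w _ _ d1 da] a2 bn by auto
  qed
qed

lemma A_lt:
  assumes n: "n \<ge> 3"
  shows "shapeA n w a b \<Longrightarrow> a < b \<Longrightarrow> nonFC n w"
proof (induction "b - a" arbitrary: w b rule: less_induct)
  case less
  show ?case
  proof (cases "b = a + 1")
    case True then show ?thesis using A_base_lt[OF n] less.prems by simp
  next
    case False
    then have b: "2 \<le> b" "b - 1 \<noteq> a" using less.prems by auto
    have st: "b - 1 < n \<and> desc n (b - 1) w \<and> shapeA n (sw (b - 1) w) a (b - 1)"
      using A_step[OF n less.prems(1) b] .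
    have "nonFC n (sw (b - 1) w)"
      using less.hyps[of "b - 1" "sw (b - 1) w"] st less.prems False by auto
    then show ?thesis using nonFC_step[of w n "b - 1"] st less.prems(1) by (auto simp: shapeA_def)
  qed
qed

lemma C_step:
  assumes n: "n \<ge> 3" and s: "shapeC n w a k" and k: "1 \<le> k" "k + 2 < a"
  shows "k < n \<and> desc n k w \<and> shapeC n (sw k w) a (k + 1)"
proof -
  have w: "w \<in> signed_perms n" and w1: "w 1 = - int a" and wn: "w n = int k" and m: "midok n w"
    using s by (auto simp: shapeC_def)
  have an: "a \<le> n" using SP_le[OF w, of 1] w1 n by auto
  have kn: "k < n" using k an by auto
  have v: "k + 1 \<in> {1..n}" using k an by auto
  have h1: "\<bar>w 1\<bar> \<noteq> int (k + 1)" using w1 k by auto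
  have h2: "\<bar>w n\<bar> \<noteq> int (k + 1)" using wn k by auto
  obtain p where p: "2 \<le> p" "p \<le> n - 1" "w p = int (k + 1)"
    using mid_pos[OF w n m v h1 h2] by blast
  have d: "desc n k w" using desc_crit[OF w k(1) kn, of n p] p wn n by auto
  have nk: "\<forall>i. 2 \<le> i \<and> i \<le> n - 1 \<longrightarrow> w i \<noteq> int k"
  proof (intro allI impI)
    fix i assume i: "2 \<le> i \<and> i \<le> n - 1"
    show "w i \<noteq> int k"
    proof
      assume "w i = int k"
      then have "\<bar>w i\<bar> = \<bar>w n\<bar>" using wn by simp
      then have "i = n" using SP_inj[OF w, of i n] i n by auto
      then show False using i n by auto
    qed
  qed
  have m2: "midok n (sw k w)"
  proof -
    have pos: "sw k w i > 0" if "2 \<le> i" "i \<le> n - 1" for i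
    proof -
      have "w i > 0" using m that by (auto simp: midok_def)
      then show ?thesis using k by (auto simp: sw_apply tau_def)
    qed
    have inc: "sw k w i < sw k w (i + 1)" if "2 \<le> i" "i + 1 \<le> n - 1" for i
    proof -
      have a: "w i > 0" "w (i+1) > 0" "w i < w (i+1)" using m that by (auto simp: midok_def)
      have b: "w i \<noteq> int k" "w (i+1) \<noteq> int k" using nk that by auto
      have "\<not> ((\<bar>w (i+1)\<bar> = int k \<and> \<bar>w i\<bar> = int k + 1) \<or> (\<bar>w (i+1)\<bar> = int k + 1 \<and> \<bar>w i\<bar> = int k))"
        using a b by auto
      then show ?thesis using tau_cmp[OF k(1)] a(3) by (simp add: sw_apply)
    qed
    show ?thesis using pos inc by (simp add: midok_def)
  qed
  have s2: "shapeC n (sw k w) a (k + 1)"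
    unfolding shapeC_def using SP_sw[OF w kn] m2 w1 wn k
    by (auto simp: sw_apply tau_def)
  show ?thesis using s2 d kn by simp
qed

lemma C_base:
  assumes n: "n \<ge> 3" and s: "shapeC n w a (a - 2)" and a: "a \<ge> 3"
  shows "nonFC n w"
proof -
  have w: "w \<in> signed_perms n" and w1: "w 1 = - int a" and wn: "w n = int (a - 2)" and m: "midok n w"
    using s by (auto simp: shapeC_def)
  have an: "a \<le> n" using SP_le[OF w, of 1] w1 n by auto
  have v: "a - 1 \<in> {1..n}" using a an by auto
  have h1: "\<bar>w 1\<bar> \<noteq> int (a - 1)" using w1 a by auto
  have h2: "\<bar>w n\<bar> \<noteq> int (a - 1)" using wn a by auto
  obtain p where p: "2 \<le> p" "p \<le> n - 1" "w p = int (a - 1)"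
    using mid_pos[OF w n m v h1 h2] by blast
  have d1: "desc n (a - 2) w" using desc_crit[OF w, of "a - 2" n p] p wn a an n by auto
  have d2: "desc n (a - 1) w" using desc_crit[OF w, of "a - 1" p 1] p w1 a an n by auto
  have "\<not> commutes (a - 2) (a - 1)" using not_commutes_Suc[of "a - 2"] a by (simp add: Suc_diff_Suc numeral_2_eq_2)
  then show ?thesis using nonFC_base[OF w _ _ d1 d2] a an by auto
qed

lemma C_all:
  assumes n: "n \<ge> 3" and a: "a \<ge> 3"
  shows "shapeC n w a k \<Longrightarrow> 1 \<le> k \<Longrightarrow> k \<le> a - 2 \<Longrightarrow> nonFC n w"
proof (induction "a - 2 - k" arbitrary: w k rule: less_induct)
  case less
  show ?case
  proof (cases "k = a - 2")
    case True then show ?thesis using C_base[OF n _ a] less.prems by simp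
  next
    case False
    then have k2: "k + 2 < a" using less.prems by auto
    have st: "k < n \<and> desc n k w \<and> shapeC n (sw k w) a (k + 1)" using C_step[OF n less.prems(1) less.prems(2) k2] .
    have "nonFC n (sw k w)" using less.hyps[of "k + 1" "sw k w"] st k2 less.prems by auto
    then show ?thesis using nonFC_step[of w n k] st less.prems(1) by (auto simp: shapeC_def)
  qed
qed

lemma A_b1:
  assumes n: "n \<ge> 3" and s: "shapeA n w a 1" and a: "a \<ge> 3"
  shows "nonFC n w"
proof -
  have w: "w \<in> signed_perms n" and w1: "w 1 = - int a" and wn: "w n = - 1" and m: "midok n w"
    using s by (auto simp: shapeA_def)
  have d0: "desc n 0 w" using desc_crit0[OF w, of n] wn n by auto
  have n0: "0 < n" using n by auto
  have m2: "midok n (sw 0 w)"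
  proof -
    have "sw 0 w i = w i" if "2 \<le> i" "i \<le> n - 1" for i
    proof -
      have "w i > 0" using m that by (auto simp: midok_def)
      moreover have "w i \<noteq> 1"
      proof
        assume "w i = 1"
        then have "\<bar>w i\<bar> = \<bar>w n\<bar>" using wn by simp
        then have "i = n" using SP_inj[OF w, of i n] that n by auto
        then show False using that n by auto
      qed
      ultimately show ?thesis by (auto simp: sw_apply tau_def)
    qed
    then show ?thesis using m unfolding midok_def by (metis add_le_imp_le_left le_add2 le_trans add.commute)
  qed
  have sC: "shapeC n (sw 0 w) a 1"
    unfolding shapeC_def using SP_sw[OF w n0] m2 w1 wn a by (auto simp: sw_apply tau_def)
  have "nonFC n (sw 0 w)" using C_all[OF n a sC] a by auto
  then show ?thesis using nonFC_step[OF w n0 d0] by simp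
qed

lemma A_gt:
  assumes n: "n \<ge> 3"
  shows "shapeA n w a b \<Longrightarrow> b < a \<Longrightarrow> \<not> (a = 2 \<and> b = 1) \<Longrightarrow> nonFC n w"
proof (induction b arbitrary: w)
  case 0
  then have "w n = 0" by (simp add: shapeA_def)
  moreover have "w n \<noteq> 0" using 0 SP_nz[of w n n] n by (auto simp: shapeA_def)
  ultimately show ?case by simp
next
  case (Suc b)
  show ?case
  proof (cases b)
    case 0
    then show ?thesis using A_b1[OF n] Suc.prems by auto
  next
    case (Suc b')
    have bb: "2 \<le> Suc b" "Suc b - 1 \<noteq> a" using Suc Suc.prems by auto
    have st: "Suc b - 1 < n \<and> desc n (Suc b - 1) w \<and> shapeA n (sw (Suc b - 1) w) a (Suc b - 1)"
      using A_step[OF n Suc.prems(1) bb] .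
    have "nonFC n (sw b w)" using Suc.IH[of "sw b w"] st Suc.prems Suc by auto
    then show ?thesis using nonFC_step[of w n b] st Suc.prems(1) by (auto simp: shapeA_def)
  qed
qed

lemma A_nonFC:
  assumes n: "n \<ge> 3" and s: "shapeA n w a b" and ab: "\<not> (a = 2 \<and> b = 1)"
  shows "w \<notin> FC n"
proof -
  have w: "w \<in> signed_perms n" and w1: "w 1 = - int a" and wn: "w n = - int b"
    using s by (auto simp: shapeA_def)
  have "a \<noteq> b"
  proof
    assume "a = b"
    then have "\<bar>w 1\<bar> = \<bar>w n\<bar>" using w1 wn by simp
    then show False using SP_inj[OF w, of 1 n] n by auto
  qed
  then have "nonFC n w" using A_lt[OF n s] A_gt[OF n s] ab by (cases "a < b") auto
  then show ?thesis by (rule nonFC_notin)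
qed




definition x2 :: "nat \<Rightarrow> int" where "x2 = sw 0 idp"
definition x1 :: "nat \<Rightarrow> int" where "x1 = sw 1 x2"
definition w1 :: "nat \<Rightarrow> int" where "w1 = sw 0 x1"
definition y1 :: "nat \<Rightarrow> int" where "y1 = sw 2 x1"
definition w2 :: "nat \<Rightarrow> int" where "w2 = sw 0 y1"

lemma x2_eq: "x2 i = (if i = 1 then -1 else int i)"
  by (simp add: x2_def sw_apply idp_def tau_def)
lemma x1_eq: "x1 i = (if i = 1 then -2 else if i = 2 then 1 else int i)"
  by (simp add: x1_def sw_apply x2_eq tau_def)
lemma w1_eq: "w1 i = (if i = 1 then -2 else if i = 2 then -1 else int i)"
  by (simp add: w1_def sw_apply x1_eq tau_def)
lemma y1_eq: "y1 i = (if i = 1 then -3 else if i = 2 then 1 else if i = 3 then 2 else int i)"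
  by (simp add: y1_def sw_apply x1_eq tau_def)
lemma w2_eq: "w2 i = (if i = 1 then -3 else if i = 2 then -1 else if i = 3 then 2 else int i)"
  by (simp add: w2_def sw_apply y1_eq tau_def)

context
  fixes n :: nat
  assumes n: "n \<ge> 3"
begin

lemma SPs: "x2 \<in> signed_perms n" "x1 \<in> signed_perms n" "w1 \<in> signed_perms n"
  "y1 \<in> signed_perms n" "w2 \<in> signed_perms n"
proof -
  show a: "x2 \<in> signed_perms n" unfolding x2_def by (rule SP_sw[OF idp_SP]) (use n in simp)
  show b: "x1 \<in> signed_perms n" unfolding x1_def by (rule SP_sw[OF a]) (use n in simp)
  show "w1 \<in> signed_perms n" unfolding w1_def by (rule SP_sw[OF b]) (use n in simp)
  show c: "y1 \<in> signed_perms n" unfolding y1_def by (rule SP_sw[OF b]) (use n in simp)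
  show "w2 \<in> signed_perms n" unfolding w2_def by (rule SP_sw[OF c]) (use n in simp)
qed

lemma desc_std:
  assumes e: "e \<in> signed_perms n" and a: "1 \<le> a" "a < n" and ea: "e a = int a" "e (a + 1) = int a + 1"
  shows "\<not> desc n a e"
  using desc_crit[OF e a, of a "a + 1"] ea a by auto

lemma D_x2: "a < n \<Longrightarrow> desc n a x2 \<longleftrightarrow> a = 0"
proof -
  assume an: "a < n"
  consider "a = 0" | "a = 1" | "a \<ge> 2" by linarith
  then show ?thesis
  proof cases
    case 1 then show ?thesis using desc_crit0[OF SPs(1), of 1] n by (simp add: x2_eq)
  next
    case 2 then show ?thesis using desc_crit[OF SPs(1), of 1 1 2] n by (simp add: x2_eq)
  next
    case 3 then show ?thesis using desc_std[OF SPs(1), of a] an by (simp add: x2_eq)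
  qed
qed

lemma D_x1: "a < n \<Longrightarrow> desc n a x1 \<longleftrightarrow> a = 1"
proof -
  assume an: "a < n"
  consider "a = 0" | "a = 1" | "a = 2" | "a \<ge> 3" by linarith
  then show ?thesis
  proof cases
    case 1 then show ?thesis using desc_crit0[OF SPs(2), of 2] n by (simp add: x1_eq)
  next
    case 2 then show ?thesis using desc_crit[OF SPs(2), of 1 2 1] n by (simp add: x1_eq)
  next
    case 3 then show ?thesis using desc_crit[OF SPs(2), of 2 1 3] n an by (simp add: x1_eq)
  next
    case 4 then show ?thesis using desc_std[OF SPs(2), of a] an by (simp add: x1_eq)
  qed
qed

lemma D_w1: "a < n \<Longrightarrow> desc n a w1 \<longleftrightarrow> a = 0"
proof -
  assume an: "a < n"
  consider "a = 0" | "a = 1" | "a = 2" | "a \<ge> 3" by linarith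
  then show ?thesis
  proof cases
    case 1 then show ?thesis using desc_crit0[OF SPs(3), of 2] n by (simp add: w1_eq)
  next
    case 2 then show ?thesis using desc_crit[OF SPs(3), of 1 2 1] n by (simp add: w1_eq)
  next
    case 3 then show ?thesis using desc_crit[OF SPs(3), of 2 1 3] n an by (simp add: w1_eq)
  next
    case 4 then show ?thesis using desc_std[OF SPs(3), of a] an by (simp add: w1_eq)
  qed
qed

lemma D_y1: "a < n \<Longrightarrow> desc n a y1 \<longleftrightarrow> a = 2"
proof -
  assume an: "a < n"
  consider "a = 0" | "a = 1" | "a = 2" | "a = 3" | "a \<ge> 4" by linarith
  then show ?thesis
  proof cases
    case 1 then show ?thesis using desc_crit0[OF SPs(4), of 2] n by (simp add: y1_eq)
  next
    case 2 then show ?thesis using desc_crit[OF SPs(4), of 1 2 3] n by (simp add: y1_eq)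
  next
    case 3 then show ?thesis using desc_crit[OF SPs(4), of 2 3 1] n an by (simp add: y1_eq)
  next
    case 4 then show ?thesis using desc_crit[OF SPs(4), of 3 1 4] n an by (simp add: y1_eq)
  next
    case 5 then show ?thesis using desc_std[OF SPs(4), of a] an by (simp add: y1_eq)
  qed
qed

lemma D_w2: "a < n \<Longrightarrow> desc n a w2 \<longleftrightarrow> a = 0 \<or> a = 2"
proof -
  assume an: "a < n"
  consider "a = 0" | "a = 1" | "a = 2" | "a = 3" | "a \<ge> 4" by linarith
  then show ?thesis
  proof cases
    case 1 then show ?thesis using desc_crit0[OF SPs(5), of 2] n by (simp add: w2_eq)
  next
    case 2 then show ?thesis using desc_crit[OF SPs(5), of 1 2 3] n by (simp add: w2_eq)
  next
    case 3 then show ?thesis using desc_crit[OF SPs(5), of 2 3 1] n an by (simp add: w2_eq)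
  next
    case 4 then show ?thesis using desc_crit[OF SPs(5), of 3 1 4] n an by (simp add: w2_eq)
  next
    case 5 then show ?thesis using desc_std[OF SPs(5), of a] an by (simp add: w2_eq)
  qed
qed

lemma sws: "sw 0 x2 = idp" "sw 1 x1 = x2" "sw 0 w1 = x1" "sw 2 y1 = x1" "sw 0 w2 = y1"
  by (simp_all add: x2_def x1_def w1_def y1_def w2_def sw_sw)

lemma FC_x2: "x2 \<in> FC n"
  by (rule FC_intro[OF SPs(1)]) (use D_x2 sws idp_FC in auto)

lemma FC_x1: "x1 \<in> FC n"
  by (rule FC_intro[OF SPs(2)]) (use D_x1 sws FC_x2 in auto)

lemma FC_w1: "w1 \<in> FC n"
  by (rule FC_intro[OF SPs(3)]) (use D_w1 sws FC_x1 in auto)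

lemma FC_y1: "y1 \<in> FC n"
  by (rule FC_intro[OF SPs(4)]) (use D_y1 sws FC_x1 in auto)

lemma sw2_w2: "sw 2 w2 = w1"
proof -
  have "sw 2 w2 = sw 2 (sw 0 y1)" by (simp add: w2_def)
  also have "\<dots> = sw 0 (sw 2 y1)" using sw_comm[of 2 0] by simp
  also have "\<dots> = w1" by (simp add: y1_def w1_def sw_sw)
  finally show ?thesis .
qed

lemma FC_w2: "w2 \<in> FC n"
proof (rule FC_intro[OF SPs(5)])
  show "\<forall>a<n. desc n a w2 \<longrightarrow> sw a w2 \<in> FC n"
    using D_w2 sw2_w2 FC_w1 FC_y1 sws by auto
  have "desc n 2 (sw 0 w2)" using D_y1 n sws by simp
  moreover have "desc n 0 (sw 2 w2)" using D_w1 n by (simp add: sw2_w2)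
  ultimately show "\<forall>a<n. \<forall>b<n. desc n a w2 \<and> desc n b w2 \<and> a \<noteq> b \<longrightarrow> (a + 2 \<le> b \<or> b + 2 \<le> a) \<and> desc n b (sw a w2)"
    using D_w2 by auto
qed

end




definition al1 :: "nat \<Rightarrow> nat \<Rightarrow> nat" where "al1 n k = (if k = 1 then n - 2 else 0)"
definition al2 :: "nat \<Rightarrow> nat \<Rightarrow> nat" where "al2 n k = (if k = 2 then n - 2 else 0)"
definition be0 :: "nat \<Rightarrow> nat" where "be0 k = (if k = 1 \<or> k = 2 then 1 else 0)"

definition PS :: "nat \<Rightarrow> (nat \<Rightarrow> int) \<Rightarrow> (nat \<Rightarrow> nat) \<Rightarrow> (nat \<Rightarrow> nat) \<Rightarrow> (nat \<Rightarrow> nat) set" where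
  "PS n w \<alpha> \<beta> = {ix :: nat \<Rightarrow> nat.
      (\<forall>j. j \<notin> {1..n} \<longrightarrow> ix j = 0) \<and> (\<forall>j\<in>{1..n}. 1 \<le> ix j)
    \<and> (\<forall>j. 1 \<le> j \<and> j < n \<longrightarrow> ix j \<le> ix (j+1))
    \<and> (\<forall>j\<in>rDes n w. ix j < ix (j+1))
    \<and> (\<forall>k. \<alpha> k = card {j \<in> {1..n}. j \<notin> Neg n w \<and> ix j = k})
    \<and> (\<forall>k. \<beta> k = card {j \<in> {1..n}. j \<in> Neg n w \<and> ix j = k})}"

lemma pc_PS: "poirier_coeff n w \<alpha> \<beta> = card (PS n w \<alpha> \<beta>)"
  by (simp add: poirier_coeff_def PS_def)

lemma PS_bound:
  assumes ix: "ix \<in> PS n w \<alpha> \<beta>" and j: "j \<in> {1..n}"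
  shows "(j \<notin> Neg n w \<longrightarrow> \<alpha> (ix j) \<ge> 1) \<and> (j \<in> Neg n w \<longrightarrow> \<beta> (ix j) \<ge> 1)"
proof -
  have A: "\<alpha> (ix j) = card {j' \<in> {1..n}. j' \<notin> Neg n w \<and> ix j' = ix j}"
   and B: "\<beta> (ix j) = card {j' \<in> {1..n}. j' \<in> Neg n w \<and> ix j' = ix j}"
    using ix by (auto simp: PS_def)
  have f1: "finite {j' \<in> {1..n}. j' \<notin> Neg n w \<and> ix j' = ix j}" by simp
  have f2: "finite {j' \<in> {1..n}. j' \<in> Neg n w \<and> ix j' = ix j}" by simp
  show ?thesis
  proof (intro conjI impI)
    assume "j \<notin> Neg n w"
    then have "j \<in> {j' \<in> {1..n}. j' \<notin> Neg n w \<and> ix j' = ix j}" using j by simp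
    then have "card {j' \<in> {1..n}. j' \<notin> Neg n w \<and> ix j' = ix j} > 0" using f1 card_gt_0_iff by blast
    then show "\<alpha> (ix j) \<ge> 1" using A by simp
  next
    assume "j \<in> Neg n w"
    then have "j \<in> {j' \<in> {1..n}. j' \<in> Neg n w \<and> ix j' = ix j}" using j by simp
    then have "card {j' \<in> {1..n}. j' \<in> Neg n w \<and> ix j' = ix j} > 0" using f2 card_gt_0_iff by blast
    then show "\<beta> (ix j) \<ge> 1" using B by simp
  qed
qed

lemma PS_finite:
  assumes "\<forall>k. k > 2 \<longrightarrow> \<alpha> k = 0 \<and> \<beta> k = 0"
  shows "finite (PS n w \<alpha> \<beta>)"
proof -
  have "PS n w \<alpha> \<beta> \<subseteq> {f. \<forall>x. (x \<in> {1..n} \<longrightarrow> f x \<in> {..2}) \<and> (x \<notin> {1..n} \<longrightarrow> f x = 0)}"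
  proof
    fix ix assume ix: "ix \<in> PS n w \<alpha> \<beta>"
    have "ix x \<le> 2" if "x \<in> {1..n}" for x
      using PS_bound[OF ix that] assms by (cases "x \<in> Neg n w") (auto simp: not_le[symmetric])
    then show "ix \<in> {f. \<forall>x. (x \<in> {1..n} \<longrightarrow> f x \<in> {..2}) \<and> (x \<notin> {1..n} \<longrightarrow> f x = 0)}"
      using ix by (auto simp: PS_def)
  qed
  moreover have "finite {f::nat\<Rightarrow>nat. \<forall>x. (x \<in> {1..n} \<longrightarrow> f x \<in> {..2}) \<and> (x \<notin> {1..n} \<longrightarrow> f x = 0)}"
    by (rule finite_set_of_finite_funs) auto
  ultimately show ?thesis by (rule finite_subset)
qed

lemma mono_le:
  assumes m: "\<forall>j. 1 \<le> j \<and> j < n \<longrightarrow> (f::nat\<Rightarrow>nat) j \<le> f (j+1)" and i: "1 \<le> i"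
  shows "i \<le> k \<Longrightarrow> k \<le> n \<Longrightarrow> f i \<le> f k"
proof (induction k)
  case 0 then show ?case using i by simp
next
  case (Suc k)
  show ?case
  proof (cases "i = Suc k")
    case True then show ?thesis by simp
  next
    case False
    then have "f i \<le> f k" using Suc by auto
    moreover have "f k \<le> f (k+1)" using m Suc.prems False i by auto
    ultimately show ?thesis by simp
  qed
qed

lemma card1_eq:
  assumes "card S = 1" "x \<in> S" "y \<in> S"
  shows "x = y"
  using assms by (metis card_1_singletonE singletonD)

definition ix1 :: "nat \<Rightarrow> nat \<Rightarrow> nat" where
  "ix1 n j = (if 1 \<le> j \<and> j < n then 1 else if j = n then 2 else 0)"

lemma m1_char:
  assumes n: "n \<ge> 3" and w: "w \<in> signed_perms n" and ix: "ix \<in> PS n w (al1 n) be0"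
  shows "ix = ix1 n \<and> shapeA n w (nat (- w 1)) (nat (- w n))"
proof -
  let ?N = "Neg n w"
  have out: "\<forall>j. j \<notin> {1..n} \<longrightarrow> ix j = 0" and mono: "\<forall>j. 1 \<le> j \<and> j < n \<longrightarrow> ix j \<le> ix (j+1)"
    and des: "\<forall>j\<in>rDes n w. ix j < ix (j+1)"
    and B: "\<forall>k. be0 k = card {j \<in> {1..n}. j \<in> ?N \<and> ix j = k}"
    using ix by (auto simp: PS_def)
  have c1: "ix j = 1" if "j \<in> {1..n}" "j \<notin> ?N" for j
    using PS_bound[OF ix that(1)] that(2) by (auto simp: al1_def split: if_splits)
  have c2: "ix j = 1 \<or> ix j = 2" if "j \<in> {1..n}" "j \<in> ?N" for j
    using PS_bound[OF ix that(1)] that(2) by (auto simp: be0_def split: if_splits)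
  have c12: "ix j = 1 \<or> ix j = 2" if "j \<in> {1..n}" for j using c1 c2 that by blast
  have S2: "card {j \<in> {1..n}. j \<in> ?N \<and> ix j = 2} = 1" using B[rule_format, of 2] by (simp add: be0_def)
  have S1: "card {j \<in> {1..n}. j \<in> ?N \<and> ix j = 1} = 1" using B[rule_format, of 1] by (simp add: be0_def)
  have nn: "n \<in> {1..n}" using n by auto
  have ixn: "ix n = 2"
  proof (rule ccontr)
    assume "ix n \<noteq> 2"
    then have "ix n = 1" using c12[OF nn] by auto
    then have "ix j \<le> 1" if "j \<in> {1..n}" for j using mono_le[OF mono, of j n] that by auto
    then have E: "{j \<in> {1..n}. j \<in> ?N \<and> ix j = 2} = {}" by fastforce
    show False using S2 unfolding E by simp
  qed
  have nN: "n \<in> ?N" using c1[OF nn] ixn by auto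
  have c5: "ix j = 1" if "1 \<le> j" "j < n" for j
  proof (rule ccontr)
    assume "ix j \<noteq> 1"
    then have "ix j = 2" using c12[of j] that by auto
    then have "j \<in> ?N" using c1[of j] that by auto
    then have "j = n" using card1_eq[OF S2, of j n] \<open>ix j = 2\<close> nN ixn that by auto
    then show False using that by simp
  qed
  have ixeq: "ix = ix1 n"
  proof
    fix j show "ix j = ix1 n j"
      using c5[of j] ixn out[rule_format, of j] by (auto simp: ix1_def)
  qed
  have c6: "\<not> rless (w (j+1)) (w j)" if "1 \<le> j" "j + 1 \<le> n - 1" for j
  proof
    assume "rless (w (j+1)) (w j)"
    then have "j \<in> rDes n w" using that by (auto simp: rDes_def)
    then have "ix j < ix (j+1)" using des by blast
    moreover have "j < n" "j + 1 < n" using that n by auto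
    ultimately show False using c5[of j] c5[of "j+1"] that by auto
  qed
  have inS1: "j \<in> {j \<in> {1..n}. j \<in> ?N \<and> ix j = 1}" if "1 \<le> j" "j < n" "w j < 0" for j
    using that c5[of j] by (auto simp: Neg_def)
  have c8: "w j > 0" if "2 \<le> j" "j \<le> n - 1" for j
  proof (rule ccontr)
    assume "\<not> w j > 0"
    moreover have "w j \<noteq> 0" using SP_nz[OF w, of j] that by auto
    ultimately have wj: "w j < 0" by simp
    have nr: "\<not> rless (w j) (w (j - 1))" using c6[of "j - 1"] that by auto
    have "j - 1 \<in> {1..n}" using that n by auto
    then have "w (j - 1) \<noteq> 0" using SP_nz[OF w] by blast
    then have wj1: "w (j - 1) < 0" using nr wj by (auto simp: rless_def)
    have "j - 1 = j" using card1_eq[OF S1 inS1[of "j - 1"] inS1[of j]] wj wj1 that by auto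
    then show False using that by simp
  qed
  have w1: "w 1 < 0"
  proof -
    obtain j where j: "j \<in> {j \<in> {1..n}. j \<in> ?N \<and> ix j = 1}" using S1
      by (metis card_1_singletonE singletonI)
    then have "j \<noteq> n" using ixn by auto
    then have jn: "1 \<le> j" "j \<le> n - 1" using j by auto
    have "j = 1"
    proof (rule ccontr)
      assume "j \<noteq> 1"
      then have "2 \<le> j" using jn by auto
      then have "w j > 0" using c8 jn by auto
      then show False using j by (auto simp: Neg_def)
    qed
    then show ?thesis using j by (auto simp: Neg_def)
  qed
  have wn: "w n < 0" using nN by (auto simp: Neg_def)
  have c10: "w i < w (i + 1)" if "2 \<le> i" "i + 1 \<le> n - 1" for i
  proof -
    have p: "w i > 0" "w (i+1) > 0" using c8 that by auto
    have "\<not> rless (w (i+1)) (w i)" using c6[of i] that by auto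
    then have "w i \<le> w (i+1)" using p by (auto simp: rless_def)
    moreover have "w i \<noteq> w (i+1)"
    proof
      assume "w i = w (i+1)"
      moreover have "i \<in> {1..n}" "i + 1 \<in> {1..n}" using that n by auto
      ultimately have "i = i + 1" using SP_inj[OF w] by (metis abs_eq_iff)
      then show False by simp
    qed
    ultimately show ?thesis by simp
  qed
  have "shapeA n w (nat (- w 1)) (nat (- w n))"
    unfolding shapeA_def midok_def using w w1 wn c8 c10 by auto
  then show ?thesis using ixeq by simp
qed

lemma m1_le:
  assumes n: "n \<ge> 3" and w: "w \<in> signed_perms n"
  shows "poirier_coeff n w (al1 n) be0 \<le> 1"
proof -
  have "PS n w (al1 n) be0 \<subseteq> {ix1 n}" using m1_char[OF n w] by blast
  then have "card (PS n w (al1 n) be0) \<le> card {ix1 n}" by (rule card_mono[rotated]) simp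
  then show ?thesis by (simp add: pc_PS)
qed

lemma m1_shape:
  assumes n: "n \<ge> 3" and w: "w \<in> signed_perms n" and p: "poirier_coeff n w (al1 n) be0 \<noteq> 0"
  shows "shapeA n w (nat (- w 1)) (nat (- w n))"
proof -
  have "PS n w (al1 n) be0 \<noteq> {}" using p by (auto simp: pc_PS)
  then obtain ix where "ix \<in> PS n w (al1 n) be0" by blast
  then show ?thesis using m1_char[OF n w] by blast
qed

definition w21 :: "nat \<Rightarrow> nat \<Rightarrow> int" where
  "w21 n i = (if i = 1 then -2 else if i = n then -1 else if 2 \<le> i \<and> i \<le> n - 1 then int i + 1 else int i)"

lemma shape21:
  assumes n: "n \<ge> 3" and s: "shapeA n w 2 1"
  shows "w = w21 n"
proof -
  have w: "w \<in> signed_perms n" and w1: "w 1 = -2" and wn: "w n = -1" and m: "midok n w"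
    using s by (auto simp: shapeA_def)
  have mid: "3 \<le> w i \<and> w i \<le> int n" if "2 \<le> i" "i \<le> n - 1" for i
  proof -
    have p: "w i > 0" using m that by (auto simp: midok_def)
    have le: "\<bar>w i\<bar> \<le> int n" using SP_le[OF w, of i] that by auto
    have "w i \<noteq> 1"
    proof
      assume "w i = 1"
      then have "\<bar>w i\<bar> = \<bar>w n\<bar>" using wn by simp
      moreover have "i \<in> {1..n}" "n \<in> {1..n}" using that n by auto
      ultimately have "i = n" using SP_inj[OF w] by blast
      then show False using that n by simp
    qed
    moreover have "w i \<noteq> 2"
    proof
      assume "w i = 2"
      then have "\<bar>w i\<bar> = \<bar>w 1\<bar>" using w1 by simp
      moreover have "i \<in> {1..n}" "1 \<in> {1..n}" using that n by auto
      ultimately have "i = 1" using SP_inj[OF w] by blast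
      then show False using that n by simp
    qed
    ultimately show ?thesis using p le by auto
  qed
  have inc: "w i < w (i+1)" if "2 \<le> i" "i + 1 \<le> n - 1" for i using m that by (auto simp: midok_def)
  have ge: "2 \<le> i \<Longrightarrow> i \<le> n - 1 \<Longrightarrow> w i \<ge> int i + 1" for i
  proof (induction i)
    case 0 then show ?case by simp
  next
    case (Suc i)
    show ?case
    proof (cases "i = 1")
      case True then show ?thesis using mid[of 2] Suc.prems by (auto simp: numeral_2_eq_2)
    next
      case False
      then have "w i \<ge> int i + 1" using Suc by auto
      moreover have "w i < w (Suc i)" using inc[of i] Suc.prems False by auto
      ultimately show ?thesis by simp
    qed
  qed
  have le: "d \<le> n - 3 \<Longrightarrow> w (n - 1 - d) \<le> int (n - 1 - d) + 1" for d
  proof (induction d)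
    case 0 then show ?case using mid[of "n - 1"] n by auto
  next
    case (Suc d)
    have "w (n - 1 - Suc d) < w (n - 1 - Suc d + 1)" using inc[of "n - 1 - Suc d"] Suc.prems n by auto
    moreover have "n - 1 - Suc d + 1 = n - 1 - d" using Suc.prems n by auto
    ultimately show ?case using Suc by auto
  qed
  show ?thesis
  proof
    fix i
    show "w i = w21 n i"
    proof (cases "2 \<le> i \<and> i \<le> n - 1")
      case True
      have d: "n - 1 - i \<le> n - 3" using True n by auto
      have e: "n - 1 - (n - 1 - i) = i" using True n by auto
      have "w i \<le> int i + 1" using le[OF d] unfolding e .
      then show ?thesis using ge[of i] True n by (auto simp: w21_def)
    next
      case False
      then have "i = 0 \<or> i = 1 \<or> i = n \<or> i > n" by auto
      then show ?thesis using w1 wn SP_out[OF w, of i] n by (auto simp: w21_def)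
    qed
  qed
qed

lemma ix0_in:
  assumes n: "n \<ge> 3" and e: "e = w1 \<or> e = w2"
  shows "(\<lambda>j. if j = 1 then 1 else if 2 \<le> j \<and> j \<le> n then 2 else 0) \<in> PS n e (al2 n) be0"
proof -
  let ?ix = "\<lambda>j::nat. if j = 1 then 1 else if 2 \<le> j \<and> j \<le> n then 2 else (0::nat)"
  have ev: "e i = (if i = 1 then (if e = w1 then -2 else -3) else if i = 2 then -1
     else if i = 3 then (if e = w1 then 3 else 2) else int i)" for i
    using e by (auto simp: w1_eq w2_eq)
  have N: "Neg n e = {1, 2}" using n by (auto simp: Neg_def ev)
  have rd: "\<forall>j\<in>rDes n e. ?ix j < ?ix (j+1)"
  proof
    fix j assume j: "j \<in> rDes n e"
    then have j1: "1 \<le> j" "j < n" "rless (e (j+1)) (e j)" by (auto simp: rDes_def)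
    have "j = 1"
    proof (rule ccontr)
      assume "j \<noteq> 1"
      then have "j \<ge> 2" using j1 by auto
      then show False using j1(3) by (auto simp: ev rless_def split: if_splits)
    qed
    then show "?ix j < ?ix (j+1)" using n by auto
  qed
  have A: "al2 n k = card {j \<in> {1..n}. j \<notin> Neg n e \<and> ?ix j = k}" for k
  proof -
    have "{j \<in> {1..n}. j \<notin> Neg n e \<and> ?ix j = k} = (if k = 2 then {3..n} else {})"
      unfolding N by auto
    then show ?thesis by (simp add: al2_def)
  qed
  have B: "be0 k = card {j \<in> {1..n}. j \<in> Neg n e \<and> ?ix j = k}" for k
  proof -
    have "{j \<in> {1..n}. j \<in> Neg n e \<and> ?ix j = k} = (if k = 1 then {1} else if k = 2 then {2} else {})"
      unfolding N using n by auto
    then show ?thesis by (simp add: be0_def)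
  qed
  show ?thesis unfolding PS_def mem_Collect_eq
  proof (intro conjI)
    show "\<forall>j. j \<notin> {1..n} \<longrightarrow> ?ix j = 0" using n by auto
    show "\<forall>j\<in>{1..n}. 1 \<le> ?ix j" using n by auto
    show "\<forall>j. 1 \<le> j \<and> j < n \<longrightarrow> ?ix j \<le> ?ix (j+1)" using n by auto
    show "\<forall>j\<in>rDes n e. ?ix j < ?ix (j+1)" by (rule rd)
    show "\<forall>k. al2 n k = card {j \<in> {1..n}. j \<notin> Neg n e \<and> ?ix j = k}" using A by blast
    show "\<forall>k. be0 k = card {j \<in> {1..n}. j \<in> Neg n e \<and> ?ix j = k}" using B by blast
  qed
qed

lemma m2_ge:
  assumes n: "n \<ge> 3" and e: "e = w1 \<or> e = w2"
  shows "poirier_coeff n e (al2 n) be0 \<ge> 1"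
proof -
  have f: "finite (PS n e (al2 n) be0)" by (rule PS_finite) (auto simp: al2_def be0_def)
  have "PS n e (al2 n) be0 \<noteq> {}" using ix0_in[OF n e] by blast
  then show ?thesis using f by (simp add: pc_PS Suc_le_eq card_gt_0_iff)
qed




lemma finite_SP: "finite (signed_perms n)"
proof -
  define g where "g f = (\<lambda>x. if x \<in> {1..n} then f x else (0::int))" for f :: "nat \<Rightarrow> int"
  have "g ` signed_perms n \<subseteq> {f. \<forall>x. (x \<in> {1..n} \<longrightarrow> f x \<in> {- int n..int n}) \<and> (x \<notin> {1..n} \<longrightarrow> f x = 0)}"
  proof
    fix h assume "h \<in> g ` signed_perms n"
    then obtain f where f: "f \<in> signed_perms n" "h = g f" by blast
    have "f x \<in> {- int n..int n}" if "x \<in> {1..n}" for x using SP_le[OF f(1) that] by auto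
    then show "h \<in> {f. \<forall>x. (x \<in> {1..n} \<longrightarrow> f x \<in> {- int n..int n}) \<and> (x \<notin> {1..n} \<longrightarrow> f x = 0)}"
      using f by (auto simp: g_def)
  qed
  moreover have "finite {f::nat\<Rightarrow>int. \<forall>x. (x \<in> {1..n} \<longrightarrow> f x \<in> {- int n..int n}) \<and> (x \<notin> {1..n} \<longrightarrow> f x = 0)}"
    by (rule finite_set_of_finite_funs) auto
  ultimately have fin: "finite (g ` signed_perms n)" by (rule finite_subset)
  have "inj_on g (signed_perms n)"
  proof (rule inj_onI)
    fix f1 f2 assume f: "f1 \<in> signed_perms n" "f2 \<in> signed_perms n" "g f1 = g f2"
    show "f1 = f2"
    proof
      fix x
      show "f1 x = f2 x"
      proof (cases "x \<in> {1..n}")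
        case True
        then show ?thesis using fun_cong[OF f(3), of x] by (simp add: g_def)
      next
        case False
        then show ?thesis using SP_out[OF f(1) False] SP_out[OF f(2) False] by simp
      qed
    qed
  qed
  then show ?thesis using fin finite_imageD by blast
qed

lemma finite_FC: "finite (FC n)"
  by (rule finite_subset[OF _ finite_SP[of n]]) (auto simp: FC_def)

lemma QP_upper:
  assumes n: "n \<ge> 3"
  shows "QP_coeff n (FC n) (al1 n) be0 \<le> 1"
proof -
  have t: "poirier_coeff n w (al1 n) be0 \<le> (if w = w21 n then 1 else 0)" if w: "w \<in> FC n" for w
  proof (cases "poirier_coeff n w (al1 n) be0 = 0")
    case True then show ?thesis by simp
  next
    case False
    have ws: "w \<in> signed_perms n" using w by (auto simp: FC_def)
    have s: "shapeA n w (nat (- w 1)) (nat (- w n))" using m1_shape[OF n ws False] .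
    have "nat (- w 1) = 2 \<and> nat (- w n) = 1" using A_nonFC[OF n s] w by blast
    then have "w = w21 n" using shape21[OF n] s by metis
    then show ?thesis using m1_le[OF n ws] by simp
  qed
  have "QP_coeff n (FC n) (al1 n) be0 \<le> (\<Sum>w\<in>FC n. if w = w21 n then 1 else 0)"
    unfolding QP_coeff_def by (rule sum_mono) (rule t)
  also have "\<dots> = (if w21 n \<in> FC n then 1 else 0)" using sum.delta[OF finite_FC, of "w21 n" "\<lambda>_. 1::nat"] by simp
  also have "\<dots> \<le> 1" by simp
  finally show ?thesis .
qed

lemma QP_lower:
  assumes n: "n \<ge> 3"
  shows "QP_coeff n (FC n) (al2 n) be0 \<ge> 2"
proof -
  have sub: "{w1, w2} \<subseteq> FC n" using FC_w1[OF n] FC_w2[OF n] by auto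
  have ne: "w1 \<noteq> w2"
  proof
    assume "w1 = w2"
    then have "w1 1 = w2 1" by simp
    then show False by (simp add: w1_eq w2_eq)
  qed
  have "(\<Sum>w\<in>{w1, w2}. poirier_coeff n w (al2 n) be0) \<le> QP_coeff n (FC n) (al2 n) be0"
    unfolding QP_coeff_def by (rule sum_mono2[OF finite_FC sub]) simp
  moreover have "(\<Sum>w\<in>{w1, w2}. poirier_coeff n w (al2 n) be0) \<ge> 2"
    using ne m2_ge[OF n, of w1] m2_ge[OF n, of w2] by simp
  ultimately show ?thesis by simp
qed

theorem mainTheorem15:
  fixes n :: nat
  assumes "n > 2"
  shows "\<not> poirier_schur_positive n (FC n)"
proof
  assume psp: "poirier_schur_positive n (FC n)"
  have n: "n \<ge> 3" using assms by simp
  define \<sigma> where "\<sigma> = (\<lambda>k::nat. if k = 1 then 2 else if k = 2 then 1 else k)"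
  have b: "bij \<sigma>" unfolding \<sigma>_def by (rule bij_betw_byWitness[where f'=\<sigma>]) (auto simp: \<sigma>_def)
  have s0: "\<sigma> 0 = 0" by (simp add: \<sigma>_def)
  have e: "al2 n \<circ> \<sigma> = al1 n" by (rule ext) (simp add: \<sigma>_def al1_def al2_def)
  have "QP_coeff n (FC n) (al2 n \<circ> \<sigma>) be0 = QP_coeff n (FC n) (al2 n) be0"
    using psp b s0 unfolding poirier_schur_positive_def by blast
  then have "QP_coeff n (FC n) (al1 n) be0 = QP_coeff n (FC n) (al2 n) be0" using e by simp
  then show False using QP_upper[OF n] QP_lower[OF n] by simp
qed



end
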